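(* Without any geometric assumption on the (shape-regular) triangulation, there exist constants $C_0,C_1,C_2>0$ depending only on shape-regularity such that, if $\gamma_0\ge C_0\sigma h_E+C_1\|\mathbf b\|_{L^\infty(\Omega)}+C_2\varepsilon h_E^{-1}$ for all $E\in\mathcal{E}_h$, then for every $u_h\in\mathcal{V}_h$ and every interior node $x_i$ with $u_h(x_i)\le u_h(x)$ for all $x\in\Omega_i$ and $u_h(x_i)<0$ (the sign condition being unnecessary if $\sigma=0$), $$\tilde a(u_h;\psi_i)\le-\sum_{E\in\mathcal{E}_i}\big(\gamma_0-C_0\sigma h_E-C_1\|\mathbf b\|_{L^\infty(\Omega)}-C_2\varepsilon h_E^{-1}\big)h_E^2\,\big|\partial_{\mathbf t}u_h|_E\big|.$$
   Context: Setting: $\Omega\subset\mathbb{R}^2$ open bounded polygonal with Lipschitz boundary; $\varepsilon>0$, $\mathbf b\in L^\infty(\Omega)^2$ divergence-free, $\sigma\ge0$ constant; $a(u,v)=\varepsilon(\nabla u,\nabla v)_\Omega+(\mathbf b\cdot\nabla u,v)_\Omega+\sigma(u,v)_\Omega$. $\mathcal{T}_h$ is a conforming triangulation from a shape-regular family, into triangles, with nodes $x_i$ and nodal basis functions $\psi_i$; $\mathcal{V}_h$ the continuous piecewise affine space. $\mathcal{E}_h$: interior edges, $h_E=|E|$, $\partial_{\mathbf t}$ tangential derivative on $E$. For an interior node $x_i$: $\mathcal{E}_i=\{E\in\mathcal{E}_h:x_i\in E\}$, $\Omega_i$ = union of triangles containing $x_i$, $S_i=\{j\neq i:x_j\text{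 shares an interior edge with }x_i\}$. $\xi_{w_h}\in\mathcal{V}_h$ has nodal values $\big|\sum_{j\in S_i}(w_h(x_i)-w_h(x_j))\big|/\sum_{j\in S_i}|w_h(x_i)-w_h(x_j)|$ (0 if the denominator vanishes); $\alpha_E(w_h)=\max_{x\in E}[\xi_{w_h}(x)]^p$ for fixed $p\in[1,\infty)$; $d_h(w_h;u_h,v_h)=\sum_{E\in\mathcal{E}_h}\gamma_0h_E^2\alpha_E(w_h)\int_E\partial_{\mathbf t}u_h\partial_{\mathbf t}v_h\,ds$ with $\gamma_0>0$; $\tilde a(w_h;v_h)=a(w_h,v_h)+d_h(w_h;w_h,v_h)$. *)

theory Defs
  imports "HOL-Analysis.Analysis" "HOL-Probability.Essential_Supremum"
begin

type_synonym pt = "real ^ 2"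

text \<open>A triangle is represented by its set of three vertices (not collinear);
  the closed triangle is its convex hull.\<close>
definition is_triangle :: "pt set \<Rightarrow> bool" where
  "is_triangle T \<longleftrightarrow> card T = 3 \<and> \<not> collinear T"

definition conforming_triangulation :: "pt set set \<Rightarrow> pt set \<Rightarrow> bool" where
  "conforming_triangulation Th Om \<longleftrightarrow>
     finite Th \<and> Th \<noteq> {} \<and> (\<forall>T\<in>Th. is_triangle T) \<and>
     closure Om = (\<Union>T\<in>Th. convex hull T) \<and>
     (\<forall>T1\<in>Th. \<forall>T2\<in>Th. T1 \<noteq> T2 \<longrightarrow>
        (convex hull T1) \<inter> (convex hull T2) = convex hull (T1 \<inter> T2))"

definition inradius :: "pt set \<Rightarrow> real" where
  "inradius T = Sup {r. \<exists>c. ball c r \<subseteq> convex hull T}"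

definition shape_regular :: "real \<Rightarrow> pt set set \<Rightarrow> bool" where
  "shape_regular \<kappa> Th \<longleftrightarrow> (\<forall>T\<in>Th. diameter (convex hull T) \<le> \<kappa> * inradius T)"

definition lipschitz_boundary :: "pt set \<Rightarrow> bool" where
  "lipschitz_boundary Om \<longleftrightarrow>
     (\<forall>x\<in>frontier Om. \<exists>r>0. \<exists>(R :: pt \<Rightarrow> pt) (L :: real) (g :: real \<Rightarrow> real).
        orthogonal_transformation R \<and> lipschitz_on L UNIV g \<and>
        (\<forall>y\<in>ball x r. y \<in> Om \<longleftrightarrow> (R (y - x)) $ 2 < g ((R (y - x)) $ 1)))"

definition nodes :: "pt set set \<Rightarrow> pt set" where
  "nodes Th = \<Union>Th"

definition interior_nodes :: "pt set set \<Rightarrow> pt set \<Rightarrow> pt set" where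
  "interior_nodes Th Om = {x \<in> nodes Th. x \<in> Om}"

text \<open>Edges are represented by their two-element vertex sets; the edge as a point set is
  its convex hull (closed segment).  Interior edges are those not contained in the
  boundary.\<close>
definition edges :: "pt set set \<Rightarrow> pt set set" where
  "edges Th = {{x, y} | x y. x \<noteq> y \<and> (\<exists>T\<in>Th. {x, y} \<subseteq> T)}"

definition interior_edges :: "pt set set \<Rightarrow> pt set \<Rightarrow> pt set set" where
  "interior_edges Th Om = {E \<in> edges Th. \<not> (convex hull E \<subseteq> frontier Om)}"

text \<open>E_i, Omega_i and S_i for a node x_i.\<close>
definition edges_at :: "pt set set \<Rightarrow> pt set \<Rightarrow> pt \<Rightarrow> pt set set" where
  "edges_at Th Om xi = {E \<in> interior_edges Th Om. xi \<in> E}"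

definition patch :: "pt set set \<Rightarrow> pt \<Rightarrow> pt set" where
  "patch Th xi = (\<Union>T\<in>{T \<in> Th. xi \<in> T}. convex hull T)"

definition neighbours :: "pt set set \<Rightarrow> pt set \<Rightarrow> pt \<Rightarrow> pt set" where
  "neighbours Th Om xi = {xj. xj \<noteq> xi \<and> {xi, xj} \<in> interior_edges Th Om}"

definition Vh :: "pt set set \<Rightarrow> (pt \<Rightarrow> real) set" where
  "Vh Th = {u. \<forall>T\<in>Th. \<exists>a c. \<forall>x\<in>convex hull T. u x = a \<bullet> x + c}"

definition nodal_interp :: "pt set set \<Rightarrow> (pt \<Rightarrow> real) \<Rightarrow> (pt \<Rightarrow> real)" where
  "nodal_interp Th f = (SOME v. v \<in> Vh Th \<and> (\<forall>x\<in>nodes Th. v x = f x))"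

definition nodal_basis :: "pt set set \<Rightarrow> pt \<Rightarrow> (pt \<Rightarrow> real)" where
  "nodal_basis Th xi = nodal_interp Th (\<lambda>x. if x = xi then 1 else 0)"

definition grad_at :: "(pt \<Rightarrow> real) \<Rightarrow> pt \<Rightarrow> pt" where
  "grad_at f x = (\<chi> i. frechet_derivative f (at x) (axis i 1))"

text \<open>C-infinity functions: differentiable everywhere with all partial derivatives
  again C-infinity (greatest fixed point).\<close>
coinductive smooth_fun :: "(pt \<Rightarrow> real) \<Rightarrow> bool" where
  "(\<forall>x. f differentiable (at x)) \<Longrightarrow>
   (\<forall>i. smooth_fun (\<lambda>x. frechet_derivative f (at x) (axis i 1))) \<Longrightarrow> smooth_fun f"

definition test_fun :: "pt set \<Rightarrow> (pt \<Rightarrow> real) \<Rightarrow> bool" where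
  "test_fun Om \<phi> \<longleftrightarrow> smooth_fun \<phi> \<and>
     (\<exists>K. compact K \<and> K \<subseteq> Om \<and> (\<forall>x. x \<notin> K \<longrightarrow> \<phi> x = 0))"

definition Linf_field :: "pt set \<Rightarrow> (pt \<Rightarrow> pt) \<Rightarrow> bool" where
  "Linf_field Om b \<longleftrightarrow> b \<in> borel_measurable (lebesgue_on Om) \<and>
     esssup (lebesgue_on Om) (\<lambda>x. ereal (norm (b x))) < \<infinity>"

definition Linf_norm :: "pt set \<Rightarrow> (pt \<Rightarrow> pt) \<Rightarrow> real" where
  "Linf_norm Om b = real_of_ereal (esssup (lebesgue_on Om) (\<lambda>x. ereal (norm (b x))))"

definition div_free :: "pt set \<Rightarrow> (pt \<Rightarrow> pt) \<Rightarrow> bool" where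
  "div_free Om b \<longleftrightarrow>
     (\<forall>\<phi>. test_fun Om \<phi> \<longrightarrow> set_lebesgue_integral lebesgue Om (\<lambda>x. b x \<bullet> grad_at \<phi> x) = 0)"

definition bilin_a :: "pt set \<Rightarrow> real \<Rightarrow> (pt \<Rightarrow> pt) \<Rightarrow> real \<Rightarrow> (pt \<Rightarrow> real) \<Rightarrow> (pt \<Rightarrow> real) \<Rightarrow> real" where
  "bilin_a Om \<epsilon> b \<sigma> u v =
     \<epsilon> * set_lebesgue_integral lebesgue Om (\<lambda>x. grad_at u x \<bullet> grad_at v x)
     + set_lebesgue_integral lebesgue Om (\<lambda>x. (b x \<bullet> grad_at u x) * v x)
     + \<sigma> * set_lebesgue_integral lebesgue Om (\<lambda>x. u x * v x)"

definition edge_ends :: "pt set \<Rightarrow> pt \<times> pt" where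
  "edge_ends E = (SOME p. E = {fst p, snd p} \<and> fst p \<noteq> snd p)"

definition edge_len :: "pt set \<Rightarrow> real" where
  "edge_len E = diameter E"

definition edge_tangent :: "pt set \<Rightarrow> pt" where
  "edge_tangent E = (1 / dist (fst (edge_ends E)) (snd (edge_ends E))) *\<^sub>R
                      (snd (edge_ends E) - fst (edge_ends E))"

definition tang_deriv :: "pt set \<Rightarrow> (pt \<Rightarrow> real) \<Rightarrow> pt \<Rightarrow> real" where
  "tang_deriv E u z = deriv (\<lambda>s. u (z + s *\<^sub>R edge_tangent E)) 0"

definition line_integral :: "pt set \<Rightarrow> (pt \<Rightarrow> real) \<Rightarrow> real" where
  "line_integral E f = integral {0 .. edge_len E}
      (\<lambda>s. f (fst (edge_ends E) + s *\<^sub>R edge_tangent E))"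

definition edge_midpoint :: "pt set \<Rightarrow> pt" where
  "edge_midpoint E = midpoint (fst (edge_ends E)) (snd (edge_ends E))"

definition xi_fun :: "pt set set \<Rightarrow> pt set \<Rightarrow> (pt \<Rightarrow> real) \<Rightarrow> (pt \<Rightarrow> real)" where
  "xi_fun Th Om w = nodal_interp Th (\<lambda>xi.
     (let den = (\<Sum>xj\<in>neighbours Th Om xi. \<bar>w xi - w xj\<bar>) in
      if den = 0 then 0 else \<bar>\<Sum>xj\<in>neighbours Th Om xi. (w xi - w xj)\<bar> / den))"

definition alpha_E :: "pt set set \<Rightarrow> pt set \<Rightarrow> real \<Rightarrow> (pt \<Rightarrow> real) \<Rightarrow> pt set \<Rightarrow> real" where
  "alpha_E Th Om p w E = Sup ((\<lambda>x. (xi_fun Th Om w x) powr p) ` (convex hull E))"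

definition d_h :: "pt set set \<Rightarrow> pt set \<Rightarrow> real \<Rightarrow> real \<Rightarrow> (pt \<Rightarrow> real) \<Rightarrow> (pt \<Rightarrow> real) \<Rightarrow> (pt \<Rightarrow> real) \<Rightarrow> real" where
  "d_h Th Om p \<gamma>0 w u v = (\<Sum>E\<in>interior_edges Th Om.
      \<gamma>0 * (edge_len E)^2 * alpha_E Th Om p w E *
      line_integral E (\<lambda>z. tang_deriv E u z * tang_deriv E v z))"

definition a_tilde :: "pt set set \<Rightarrow> pt set \<Rightarrow> real \<Rightarrow> (pt \<Rightarrow> pt) \<Rightarrow> real \<Rightarrow> real \<Rightarrow> real \<Rightarrow> (pt \<Rightarrow> real) \<Rightarrow> (pt \<Rightarrow> real) \<Rightarrow> real" where
  "a_tilde Th Om \<epsilon> b \<sigma> p \<gamma>0 w v = bilin_a Om \<epsilon> b \<sigma> w v + d_h Th Om p \<gamma>0 w w v"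

end

theory Submission
  imports Defs
begin



lemma aff_le_hull:
  fixes a :: pt
  assumes "\<forall>y\<in>convex hull T. f y = a \<bullet> y + c" "\<forall>v\<in>T. f v \<le> M" "x \<in> convex hull T"
  shows "f x \<le> M"
proof -
  have "convex hull T \<subseteq> {y. a \<bullet> y \<le> M - c}"
  proof (rule hull_minimal)
    show "T \<subseteq> {y. a \<bullet> y \<le> M - c}"
    proof
      fix v assume v: "v \<in> T"
      then have "f v = a \<bullet> v + c" using assms(1) hull_subset[of T convex] by blast
      then show "v \<in> {y. a \<bullet> y \<le> M - c}" using assms(2) v by auto
    qed
  qed (simp add: convex_halfspace_le)
  then show ?thesis using assms by auto
qed

lemma aff_ge_hull:
  fixes a :: pt
  assumes "\<forall>y\<in>convex hull T. f y = a \<bullet> y + c" "\<forall>v\<in>T. m \<le> f v" "x \<in> convex hull T"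
  shows "m \<le> f x"
proof -
  have "convex hull T \<subseteq> {y. a \<bullet> y \<ge> m - c}"
  proof (rule hull_minimal)
    show "T \<subseteq> {y. a \<bullet> y \<ge> m - c}"
    proof
      fix v assume v: "v \<in> T"
      then have "f v = a \<bullet> v + c" using assms(1) hull_subset[of T convex] by blast
      then show "v \<in> {y. a \<bullet> y \<ge> m - c}" using assms(2) v by auto
    qed
  qed (simp add: convex_halfspace_ge)
  then show ?thesis using assms by auto
qed

lemma grad_bound:
  fixes a c :: pt
  assumes "ball c r \<subseteq> S" "r > 0" "\<forall>y\<in>S. f y = a \<bullet> y + k" "\<forall>y\<in>S. m \<le> f y \<and> f y \<le> M"
  shows "r * norm a \<le> M - m"
proof (cases "a = 0")
  case True
  have "c \<in> S" using assms by auto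
  then show ?thesis using True assms by force
next
  case False
  define n where "n = (1 / norm a) *\<^sub>R a"
  have nn: "norm n = 1" using False by (simp add: n_def)
  have an: "a \<bullet> n = norm a" using False by (simp add: n_def power2_norm_eq_inner[symmetric] power2_eq_square)
  define y1 where "y1 = c + (r/2) *\<^sub>R n"
  define y2 where "y2 = c - (r/2) *\<^sub>R n"
  have "y1 \<in> ball c r" "y2 \<in> ball c r" using assms(2) nn by (auto simp: y1_def y2_def dist_norm)
  then have "y1 \<in> S" "y2 \<in> S" using assms(1) by auto
  then have "f y1 \<le> M" "m \<le> f y2" using assms(4) by auto
  then have "f y1 - f y2 \<le> M - m" by simp
  moreover have "f y1 - f y2 = r * norm a"
    using \<open>y1 \<in> S\<close> \<open>y2 \<in> S\<close> assms(3) an by (simp add: y1_def y2_def inner_add_right inner_diff_right)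
  ultimately show ?thesis by simp
qed

definition rot :: "pt \<Rightarrow> pt" where "rot v = vector [-(v$2), v$1]"

lemma inner_pt: "(x::pt) \<bullet> y = x$1 * y$1 + x$2 * y$2"
  by (simp add: inner_vec_def sum_2)

lemma rot_inner: "rot v \<bullet> w = v$1 * w$2 - v$2 * w$1"
  by (simp add: rot_def inner_pt)

lemma rot_self: "rot v \<bullet> v = 0" by (simp add: rot_inner)

lemma norm_rot: "norm (rot v) = norm v"
  by (simp add: norm_eq_sqrt_inner rot_inner inner_pt power2_eq_square algebra_simps rot_def)

lemma cross_zero_collinear:
  fixes p q s :: pt
  assumes "(q-p)$1 * (s-p)$2 - (q-p)$2 * (s-p)$1 = 0" "q \<noteq> p"
  shows "collinear {p, q, s}"
proof -
  define w1 where "w1 = q - p"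
  define w2 where "w2 = s - p"
  have d: "w1$1 * w2$2 - w1$2 * w2$1 = 0" using assms(1) by (simp add: w1_def w2_def)
  have nz: "w1 \<noteq> 0" using assms(2) by (simp add: w1_def)
  have "\<exists>c. w2 = c *\<^sub>R w1"
  proof (cases "w1$1 = 0")
    case True
    then have h2: "w1$2 \<noteq> 0" using nz
      by (metis exhaust_2 vec_eq_iff zero_index)
    have "w2$1 = 0" using d True h2 by simp
    then have "w2 = (w2$2 / w1$2) *\<^sub>R w1"
      using True h2 by (simp add: vec_eq_iff forall_2)
    then show ?thesis by blast
  next
    case False
    have "w2$2 = (w2$1 / w1$1) * w1$2"
      using d False by (simp add: field_simps)
    then have "w2 = (w2$1 / w1$1) *\<^sub>R w1"
      using False by (simp add: vec_eq_iff forall_2)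
    then show ?thesis by blast
  qed
  then have "collinear {0, w1, w2}" by (simp add: collinear_lemma)
  then have "collinear {q, p, s}"
    by (simp add: collinear_3 w1_def w2_def)
  then show ?thesis by (simp add: insert_commute)
qed




lemma tri_affine:
  assumes "is_triangle T"
  shows "\<exists>(a::pt) c. \<forall>v\<in>T. a \<bullet> v + c = f v"
proof -
  obtain p q s where T: "T = {p,q,s}" "p \<noteq> q" "q \<noteq> s" "p \<noteq> s"
    using assms unfolding is_triangle_def card_3_iff by blast
  have nc: "\<not> collinear {p,q,s}" using assms T by (simp add: is_triangle_def)
  define w1 where "w1 = q - p"
  define w2 where "w2 = s - p"
  define d where "d = w1$1 * w2$2 - w1$2 * w2$1"
  have d0: "d \<noteq> 0" using cross_zero_collinear[of q p s] nc T(2) by (auto simp: d_def w1_def w2_def)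
  define al where "al = f q - f p"
  define be where "be = f s - f p"
  define a where "a = (be / d) *\<^sub>R rot w1 - (al / d) *\<^sub>R rot w2"
  have a1: "a \<bullet> w1 = al"
    using d0 by (simp add: a_def inner_diff_left rot_self rot_inner d_def field_simps)
  have a2: "a \<bullet> w2 = be"
    using d0 by (simp add: a_def inner_diff_left rot_self rot_inner d_def field_simps)
  define c where "c = f p - a \<bullet> p"
  have "a \<bullet> q + c = f q" using a1 by (simp add: c_def w1_def al_def inner_diff_right)
  moreover have "a \<bullet> s + c = f s" using a2 by (simp add: c_def w2_def be_def inner_diff_right)
  moreover have "a \<bullet> p + c = f p" by (simp add: c_def)
  ultimately show ?thesis using T by blast
qed

lemma interp_exists:
  assumes ct: "conforming_triangulation Th Om"
  shows "\<exists>v\<in>Vh Th. \<forall>x\<in>nodes Th. v x = f x"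
proof -
  have tri: "\<And>T. T \<in> Th \<Longrightarrow> is_triangle T" using ct by (simp add: conforming_triangulation_def)
  define A where "A T = (SOME a. \<exists>c. \<forall>v\<in>T. a \<bullet> v + c = f v)" for T
  define C where "C T = (SOME c. \<forall>v\<in>T. A T \<bullet> v + c = f v)" for T
  have AC: "\<forall>v\<in>T. A T \<bullet> v + C T = f v" if "T \<in> Th" for T
  proof -
    have "\<exists>a c. \<forall>v\<in>T. a \<bullet> v + c = f v" using tri_affine[OF tri[OF that]] .
    then have "\<exists>c. \<forall>v\<in>T. A T \<bullet> v + c = f v" unfolding A_def by (rule someI_ex)
    then show ?thesis unfolding C_def by (rule someI_ex)
  qed
  have agree: "A T1 \<bullet> x + C T1 = A T2 \<bullet> x + C T2"
    if "T1 \<in> Th" "T2 \<in> Th" "x \<in> convex hull T1" "x \<in> convex hull T2" for T1 T2 x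
  proof (cases "T1 = T2")
    case False
    have h: "\<forall>T1\<in>Th. \<forall>T2\<in>Th. T1 \<noteq> T2 \<longrightarrow>
        (convex hull T1) \<inter> (convex hull T2) = convex hull (T1 \<inter> T2)"
      using ct by (simp add: conforming_triangulation_def)
    have "x \<in> convex hull (T1 \<inter> T2)" using h[rule_format, OF that(1,2) False] that(3,4) by blast
    moreover have "convex hull (T1 \<inter> T2) \<subseteq> {y. (A T1 - A T2) \<bullet> y = C T2 - C T1}"
    proof (rule hull_minimal)
      show "T1 \<inter> T2 \<subseteq> {y. (A T1 - A T2) \<bullet> y = C T2 - C T1}"
      proof
        fix y assume "y \<in> T1 \<inter> T2"
        then have "A T1 \<bullet> y + C T1 = A T2 \<bullet> y + C T2" using AC[OF that(1)] AC[OF that(2)] by auto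
        then show "y \<in> {y. (A T1 - A T2) \<bullet> y = C T2 - C T1}" by (simp add: inner_diff_left)
      qed
    qed (rule convex_hyperplane)
    ultimately have "(A T1 - A T2) \<bullet> x = C T2 - C T1" by blast
    then show ?thesis by (simp add: inner_diff_left)
  qed simp
  define v where "v x = (if \<exists>T\<in>Th. x \<in> convex hull T
     then (let T = SOME T. T \<in> Th \<and> x \<in> convex hull T in A T \<bullet> x + C T) else 0)" for x
  have vT: "v x = A T \<bullet> x + C T" if "T \<in> Th" "x \<in> convex hull T" for T x
  proof -
    have ex: "\<exists>T. T \<in> Th \<and> x \<in> convex hull T" using that by blast
    let ?T = "SOME T. T \<in> Th \<and> x \<in> convex hull T"
    have "?T \<in> Th \<and> x \<in> convex hull ?T" using someI_ex[OF ex] .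
    then have "v x = A ?T \<bullet> x + C ?T" using ex unfolding v_def Let_def by presburger
    also have "\<dots> = A T \<bullet> x + C T" using agree \<open>?T \<in> Th \<and> x \<in> convex hull ?T\<close> that by blast
    finally show ?thesis .
  qed
  have "v \<in> Vh Th" unfolding Vh_def using vT by blast
  moreover have "\<forall>x\<in>nodes Th. v x = f x"
  proof
    fix x assume "x \<in> nodes Th"
    then obtain T where T: "T \<in> Th" "x \<in> T" by (auto simp: nodes_def)
    then have "x \<in> convex hull T" using hull_inc[of x T convex] by simp
    then show "v x = f x" using vT[OF T(1)] AC[OF T(1)] T by auto
  qed
  ultimately show ?thesis by blast
qed

lemma nodal_interp_props:
  assumes "conforming_triangulation Th Om"
  shows "nodal_interp Th f \<in> Vh Th" "\<And>x. x \<in> nodes Th \<Longrightarrow> nodal_interp Th f x = f x"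
proof -
  have "\<exists>v. v \<in> Vh Th \<and> (\<forall>x\<in>nodes Th. v x = f x)" using interp_exists[OF assms] by blast
  then have "nodal_interp Th f \<in> Vh Th \<and> (\<forall>x\<in>nodes Th. nodal_interp Th f x = f x)"
    unfolding nodal_interp_def by (rule someI_ex)
  then show "nodal_interp Th f \<in> Vh Th" "\<And>x. x \<in> nodes Th \<Longrightarrow> nodal_interp Th f x = f x" by auto
qed




lemma tri_finite: "is_triangle T \<Longrightarrow> finite T"
  unfolding is_triangle_def by (metis card.infinite zero_neq_numeral)

lemma hull_bounded: "is_triangle T \<Longrightarrow> bounded (convex hull T)"
  by (simp add: tri_finite finite_imp_bounded_convex_hull)

lemma inradius_facts:
  assumes tri: "is_triangle T" and sr: "diameter (convex hull T) \<le> \<kappa> * inradius T"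
  shows "diameter (convex hull T) > 0" "inradius T > 0"
    "\<exists>c r0. r0 > inradius T / 2 \<and> ball c r0 \<subseteq> convex hull T"
proof -
  let ?H = "convex hull T" and ?D = "diameter (convex hull T)"
  define S where "S = {r. \<exists>c. ball c r \<subseteq> ?H}"
  have bH: "bounded ?H" using hull_bounded[OF tri] .
  obtain p q s where T: "T = {p,q,s}" "p \<noteq> q"
    using tri unfolding is_triangle_def card_3_iff by blast
  have "p \<in> ?H" "q \<in> ?H" using T hull_inc[of _ T convex] by auto
  then have "dist p q \<le> ?D" using diameter_bounded_bound[OF bH] by blast
  then show D0: "?D > 0" using T(2) by (meson dist_pos_lt less_le_trans)
  have S0: "0 \<in> S" by (auto simp: S_def)
  have bdd: "bdd_above S"
  proof (rule bdd_aboveI[of _ "2 * ?D"])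
    fix r assume "r \<in> S"
    then obtain c where c: "ball c r \<subseteq> ?H" by (auto simp: S_def)
    show "r \<le> 2 * ?D"
    proof (cases "r > 0")
      case True
      define e :: pt where "e = axis 1 1"
      have ne: "norm e = 1" by (simp add: e_def)
      have "c \<in> ball c r" "c + (r/2) *\<^sub>R e \<in> ball c r" using True ne by (auto simp: dist_norm)
      then have "c \<in> ?H" "c + (r/2) *\<^sub>R e \<in> ?H" using c by auto
      then have "dist c (c + (r/2) *\<^sub>R e) \<le> ?D" using diameter_bounded_bound[OF bH] by blast
      then show ?thesis using True ne by (simp add: dist_norm)
    next
      case False then show ?thesis using D0 by simp
    qed
  qed
  have rho: "inradius T = Sup S" by (simp add: inradius_def S_def)
  have "\<kappa> > 0"
  proof (rule ccontr)
    assume "\<not> \<kappa> > 0"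
    moreover have "inradius T \<ge> 0" using rho S0 bdd by (simp add: cSup_upper)
    ultimately have "\<kappa> * inradius T \<le> 0" by (simp add: mult_nonpos_nonneg)
    then show False using sr D0 by simp
  qed
  have "0 < \<kappa> * inradius T" using sr D0 by linarith
  then show rpos: "inradius T > 0" using \<open>\<kappa> > 0\<close> by (simp add: zero_less_mult_iff)
  have "inradius T / 2 < Sup S" using rpos rho by simp
  then obtain r where "r \<in> S" "inradius T / 2 < r" using less_cSup_iff[of S] S0 bdd by blast
  then show "\<exists>c r0. r0 > inradius T / 2 \<and> ball c r0 \<subseteq> convex hull T" by (auto simp: S_def)
qed

lemma third_vertex:
  assumes "is_triangle T" "p \<in> T" "q \<in> T" "p \<noteq> q"
  shows "\<exists>s. T = {p, q, s}"
proof -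
  obtain x y z where T: "T = {x,y,z}" "x \<noteq> y" "y \<noteq> z" "x \<noteq> z"
    using assms(1) unfolding is_triangle_def card_3_iff by blast
  show ?thesis using assms(2-4) unfolding T by auto
qed

lemma edge_lower:
  assumes tri: "is_triangle T" and pq: "p \<in> T" "q \<in> T" "p \<noteq> q"
    and b: "ball c r0 \<subseteq> convex hull T" and r0: "r0 > 0"
  shows "r0 \<le> 2 * dist p q"
proof -
  obtain s where T: "T = {p,q,s}" using third_vertex[OF tri pq] by blast
  have sq: "s \<noteq> q" using tri T unfolding is_triangle_def by (metis insert_absorb2 insert_commute collinear_2)
  define n where "n = (1 / norm (s - q)) *\<^sub>R rot (s - q)"
  have nn: "norm n = 1" using sq by (simp add: n_def norm_rot)
  have ns: "n \<bullet> (s - q) = 0" by (simp add: n_def rot_self)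
  define f where "f y = n \<bullet> y + (- (n \<bullet> q))" for y
  have fq: "f q = 0" by (simp add: f_def)
  have fs: "f s = 0" using ns by (simp add: f_def inner_diff_right)
  have fp: "\<bar>f p\<bar> \<le> dist p q"
  proof -
    have "f p = n \<bullet> (p - q)" by (simp add: f_def inner_diff_right)
    then have "\<bar>f p\<bar> \<le> norm n * norm (p - q)" using Cauchy_Schwarz_ineq2 by simp
    then show ?thesis using nn by (simp add: dist_norm)
  qed
  have aff: "\<forall>y\<in>convex hull T. f y = n \<bullet> y + (- (n \<bullet> q))" by (simp add: f_def)
  have bnd: "\<forall>y\<in>convex hull T. - \<bar>f p\<bar> \<le> f y \<and> f y \<le> \<bar>f p\<bar>"
  proof
    fix y assume y: "y \<in> convex hull T"
    have "f y \<le> \<bar>f p\<bar>" by (rule aff_le_hull[OF aff _ y]) (auto simp: T fq fs)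
    moreover have "- \<bar>f p\<bar> \<le> f y" by (rule aff_ge_hull[OF aff _ y]) (auto simp: T fq fs)
    ultimately show "- \<bar>f p\<bar> \<le> f y \<and> f y \<le> \<bar>f p\<bar>" by simp
  qed
  have "r0 * norm n \<le> \<bar>f p\<bar> - (- \<bar>f p\<bar>)" by (rule grad_bound[OF b r0 aff bnd])
  then show ?thesis using nn fp by simp
qed




lemma grad_affine:
  fixes a :: pt
  assumes "x \<in> interior S" "\<forall>y\<in>S. u y = a \<bullet> y + c"
  shows "grad_at u x = a"
proof -
  have d0: "((\<lambda>y. a \<bullet> y + c) has_derivative (\<lambda>h. a \<bullet> h)) (at x)"
    by (auto intro!: derivative_eq_intros)
  have "(u has_derivative (\<lambda>h. a \<bullet> h)) (at x)"
    apply (rule has_derivative_transform_within_open[OF d0 open_interior assms(1)])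
    using assms(2) interior_subset by fastforce
  then have "frechet_derivative u (at x) = (\<lambda>h. a \<bullet> h)" using frechet_derivative_at by metis
  then show ?thesis by (simp add: grad_at_def vec_eq_iff inner_axis)
qed

lemma deriv_line:
  fixes A p t :: pt
  assumes "\<forall>s. 0 \<le> s \<and> s \<le> h \<longrightarrow> u (p + s *\<^sub>R t) = A \<bullet> (p + s *\<^sub>R t) + c"
    "0 < s0" "s0 < h"
  shows "deriv (\<lambda>s. u ((p + s0 *\<^sub>R t) + s *\<^sub>R t)) 0 = A \<bullet> t"
proof -
  have d0: "((\<lambda>s. A \<bullet> ((p + s0 *\<^sub>R t) + s *\<^sub>R t) + c) has_field_derivative A \<bullet> t) (at 0)"
    by (auto intro!: derivative_eq_intros simp: inner_add_right)
  have "((\<lambda>s. u ((p + s0 *\<^sub>R t) + s *\<^sub>R t)) has_field_derivative A \<bullet> t) (at 0)"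
  proof (rule has_field_derivative_transform_within_open[OF d0, of "{-s0<..<h-s0}"])
    fix s :: real assume "s \<in> {-s0<..<h-s0}"
    then have "0 \<le> s0 + s" "s0 + s \<le> h" by auto
    then have "u (p + (s0 + s) *\<^sub>R t) = A \<bullet> (p + (s0 + s) *\<^sub>R t) + c" using assms(1) by blast
    then show "A \<bullet> ((p + s0 *\<^sub>R t) + s *\<^sub>R t) + c = u ((p + s0 *\<^sub>R t) + s *\<^sub>R t)"
      by (simp add: scaleR_add_left add.assoc)
  qed (use assms in auto)
  then show ?thesis by (rule DERIV_imp_deriv)
qed

lemma edge_ends_props:
  assumes "E \<in> edges Th"
  shows "E = {fst (edge_ends E), snd (edge_ends E)}" "fst (edge_ends E) \<noteq> snd (edge_ends E)"
proof -
  obtain x y where "E = {x,y}" "x \<noteq> y" using assms by (auto simp: edges_def)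
  then have "\<exists>p. E = {fst p, snd p} \<and> fst p \<noteq> snd p" by (intro exI[of _ "(x,y)"]) auto
  then have "E = {fst (edge_ends E), snd (edge_ends E)} \<and> fst (edge_ends E) \<noteq> snd (edge_ends E)"
    unfolding edge_ends_def by (rule someI_ex)
  then show "E = {fst (edge_ends E), snd (edge_ends E)}" "fst (edge_ends E) \<noteq> snd (edge_ends E)" by auto
qed

lemma diameter_two: "diameter {p, q::pt} = dist p q"
proof (rule antisym)
  show "diameter {p, q} \<le> dist p q"
    by (rule diameter_le) (auto simp: dist_norm norm_minus_commute)
  show "dist p q \<le> diameter {p, q}"
    by (rule diameter_bounded_bound) auto
qed

lemma edge_len_eq:
  assumes "E \<in> edges Th"
  shows "edge_len E = dist (fst (edge_ends E)) (snd (edge_ends E))"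
  using edge_ends_props[OF assms] diameter_two unfolding edge_len_def by metis

lemma edge_formulas:
  assumes E: "E \<in> edges Th" and u: "u \<in> Vh Th" and v: "v \<in> Vh Th"
  defines "p1 \<equiv> fst (edge_ends E)" and "p2 \<equiv> snd (edge_ends E)"
  shows "tang_deriv E u (edge_midpoint E) = (u p2 - u p1) / edge_len E"
    "line_integral E (\<lambda>z. tang_deriv E u z * tang_deriv E v z) = (u p2 - u p1) * (v p2 - v p1) / edge_len E"
proof -
  have Ep: "E = {p1, p2}" "p1 \<noteq> p2" using edge_ends_props[OF E] by (auto simp: p1_def p2_def)
  define h where "h = edge_len E"
  have h: "h = dist p1 p2" using edge_len_eq[OF E] by (simp add: h_def p1_def p2_def)
  have hpos: "h > 0" using h Ep by simp
  define t where "t = edge_tangent E"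
  have t: "t = (1 / h) *\<^sub>R (p2 - p1)" by (simp add: t_def edge_tangent_def h p1_def p2_def)
  obtain T where T: "T \<in> Th" "E \<subseteq> T" using E by (auto simp: edges_def)
  have seg: "p1 + s *\<^sub>R t \<in> convex hull T" if "0 \<le> s" "s \<le> h" for s
  proof -
    have "p1 + s *\<^sub>R t = (1 - s/h) *\<^sub>R p1 + (s/h) *\<^sub>R p2"
      using hpos by (simp add: t algebra_simps)
    moreover have "(1 - s/h) *\<^sub>R p1 + (s/h) *\<^sub>R p2 \<in> closed_segment p1 p2"
      using that hpos unfolding closed_segment_def by (auto intro!: exI[of _ "s/h"])
    moreover have "closed_segment p1 p2 \<subseteq> convex hull T"
      using T(2) Ep by (simp add: segment_convex_hull hull_mono)
    ultimately show ?thesis by auto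
  qed
  have p12: "p1 \<in> convex hull T" "p2 \<in> convex hull T" using T Ep hull_inc[of _ T convex] by auto
  have gen: "tang_deriv E w (p1 + s0 *\<^sub>R t) = (w p2 - w p1) / h"
    if w: "w \<in> Vh Th" and s0: "0 < s0" "s0 < h" for w s0
  proof -
    obtain A c where Ac: "\<forall>x\<in>convex hull T. w x = A \<bullet> x + c" using w T(1) unfolding Vh_def by blast
    have "deriv (\<lambda>s. w ((p1 + s0 *\<^sub>R t) + s *\<^sub>R t)) 0 = A \<bullet> t"
      by (rule deriv_line[OF _ s0]) (use Ac seg in blast)
    moreover have "A \<bullet> t = (w p2 - w p1) / h"
      using Ac p12 by (simp add: t inner_diff_right divide_inverse algebra_simps)
    ultimately show ?thesis by (simp add: tang_deriv_def t_def)
  qed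
  have mid: "edge_midpoint E = p1 + (h/2) *\<^sub>R t"
  proof -
    have a: "(h/2) *\<^sub>R t = (1/2) *\<^sub>R (p2 - p1)" using hpos by (simp add: t)
    have b: "midpoint p1 p2 = p1 + (1/2) *\<^sub>R (p2 - p1)"
      by (simp add: midpoint_def vec_eq_iff algebra_simps)
    show ?thesis using a b by (simp add: edge_midpoint_def p1_def[symmetric] p2_def[symmetric])
  qed
  show "tang_deriv E u (edge_midpoint E) = (u p2 - u p1) / edge_len E"
    using gen[OF u, of "h/2"] hpos mid by (simp add: h_def)
  have "line_integral E (\<lambda>z. tang_deriv E u z * tang_deriv E v z)
      = integral {0..h} (\<lambda>s. tang_deriv E u (p1 + s *\<^sub>R t) * tang_deriv E v (p1 + s *\<^sub>R t))"
    by (simp add: line_integral_def h_def t_def p1_def)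
  also have "\<dots> = integral {0..h} (\<lambda>s. ((u p2 - u p1) / h) * ((v p2 - v p1) / h))"
  proof (rule integral_spike[of "{0, h}"])
    fix s assume "s \<in> {0..h} - {0, h}"
    then have "0 < s" "s < h" by auto
    then show "(u p2 - u p1) / h * ((v p2 - v p1) / h) = tang_deriv E u (p1 + s *\<^sub>R t) * tang_deriv E v (p1 + s *\<^sub>R t)"
      using gen[OF u] gen[OF v] by simp
  qed simp
  also have "\<dots> = (u p2 - u p1) * (v p2 - v p1) / h"
    using hpos by (simp add: power2_eq_square field_simps)
  finally show "line_integral E (\<lambda>z. tang_deriv E u z * tang_deriv E v z) = (u p2 - u p1) * (v p2 - v p1) / edge_len E"
    by (simp add: h_def)
qed




lemma ct_tri: "conforming_triangulation Th Om \<Longrightarrow> T \<in> Th \<Longrightarrow> is_triangle T"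
  by (simp add: conforming_triangulation_def)

lemma ct_finite: "conforming_triangulation Th Om \<Longrightarrow> finite Th"
  by (simp add: conforming_triangulation_def)

lemma nodes_finite: assumes "conforming_triangulation Th Om" shows "finite (nodes Th)"
  unfolding nodes_def using ct_finite[OF assms] ct_tri[OF assms] tri_finite by blast

lemma edges_sub: "E \<in> edges Th \<Longrightarrow> E \<subseteq> nodes Th"
  by (auto simp: edges_def nodes_def)

lemma edges_finite: assumes "conforming_triangulation Th Om" shows "finite (edges Th)"
proof -
  have "edges Th \<subseteq> Pow (nodes Th)" using edges_sub by blast
  then show ?thesis using nodes_finite[OF assms] by (meson finite_Pow_iff finite_subset)
qed

lemma in_patch: "T \<in> Th \<Longrightarrow> xi \<in> T \<Longrightarrow> x \<in> convex hull T \<Longrightarrow> x \<in> patch Th xi"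
  by (auto simp: patch_def)

lemma vertex_in_patch: "T \<in> Th \<Longrightarrow> xi \<in> T \<Longrightarrow> x \<in> T \<Longrightarrow> x \<in> patch Th xi"
  using in_patch hull_inc[of x T convex] by blast

lemma edge_patch: "{xi, xj} \<in> edges Th \<Longrightarrow> xj \<in> patch Th xi"
  unfolding edges_def using vertex_in_patch
  by (smt (verit, ccfv_SIG) doubleton_eq_iff insert_subset mem_Collect_eq)

lemma psi_props:
  assumes ct: "conforming_triangulation Th Om"
  shows "nodal_basis Th xi \<in> Vh Th" "\<And>x. x \<in> nodes Th \<Longrightarrow> nodal_basis Th xi x = (if x = xi then 1 else 0)"
  using nodal_interp_props[OF ct] unfolding nodal_basis_def by auto

lemma edges_at_other:
  assumes "E \<in> edges_at Th Om xi"
  shows "\<exists>xj. E = {xi, xj} \<and> xj \<noteq> xi \<and> xj \<in> nodes Th \<and> xj \<in> neighbours Th Om xi"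
proof -
  have E: "E \<in> interior_edges Th Om" "xi \<in> E" using assms by (auto simp: edges_at_def)
  then have Ee: "E \<in> edges Th" by (simp add: interior_edges_def)
  then obtain x y where xy: "E = {x,y}" "x \<noteq> y" by (auto simp: edges_def)
  then obtain xj where "E = {xi, xj}" "xj \<noteq> xi" using E(2) by auto
  moreover have "xj \<in> nodes Th" using edges_sub[OF Ee] calculation by auto
  moreover have "xj \<in> neighbours Th Om xi" using E(1) calculation by (auto simp: neighbours_def)
  ultimately show ?thesis by blast
qed

lemma xi_fun_bounds:
  assumes ct: "conforming_triangulation Th Om" and T: "T \<in> Th" and x: "x \<in> convex hull T"
  shows "0 \<le> xi_fun Th Om w x \<and> xi_fun Th Om w x \<le> 1"
proof -
  let ?g = "\<lambda>xi. (let den = (\<Sum>xj\<in>neighbours Th Om xi. \<bar>w xi - w xj\<bar>) in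
      if den = 0 then 0 else \<bar>\<Sum>xj\<in>neighbours Th Om xi. (w xi - w xj)\<bar> / den)"
  have g01: "0 \<le> ?g y \<and> ?g y \<le> 1" for y
  proof -
    have "\<bar>\<Sum>xj\<in>neighbours Th Om y. (w y - w xj)\<bar> \<le> (\<Sum>xj\<in>neighbours Th Om y. \<bar>w y - w xj\<bar>)"
      by (rule sum_abs)
    then show ?thesis by (auto simp: Let_def divide_le_eq_1)
  qed
  have Vh: "xi_fun Th Om w \<in> Vh Th" and nv: "\<And>y. y \<in> nodes Th \<Longrightarrow> xi_fun Th Om w y = ?g y"
    using nodal_interp_props[OF ct, where f = ?g] unfolding xi_fun_def by auto
  obtain a c where ac: "\<forall>y\<in>convex hull T. xi_fun Th Om w y = a \<bullet> y + c"
    using Vh T unfolding Vh_def by blast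
  have vn: "v \<in> nodes Th" if "v \<in> T" for v using T that by (auto simp: nodes_def)
  have "xi_fun Th Om w x \<le> 1" by (rule aff_le_hull[OF ac _ x]) (use g01 nv vn in auto)
  moreover have "0 \<le> xi_fun Th Om w x" by (rule aff_ge_hull[OF ac _ x]) (use g01 nv vn in auto)
  ultimately show ?thesis by simp
qed




lemma neighbours_finite:
  assumes ct: "conforming_triangulation Th Om"
  shows "finite (neighbours Th Om xi)"
proof -
  have "neighbours Th Om xi \<subseteq> nodes Th"
    using edges_sub by (auto simp: neighbours_def interior_edges_def)
  then show ?thesis using nodes_finite[OF ct] finite_subset by blast
qed

lemma xi_fun_at_min:
  assumes ct: "conforming_triangulation Th Om" and xin: "xi \<in> nodes Th"
    and mn: "\<forall>xj\<in>neighbours Th Om xi. w xi \<le> w xj"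
    and j0: "xj0 \<in> neighbours Th Om xi" "w xj0 \<noteq> w xi"
  shows "xi_fun Th Om w xi = 1"
proof -
  let ?N = "neighbours Th Om xi"
  let ?g = "\<lambda>xi. (let den = (\<Sum>xj\<in>neighbours Th Om xi. \<bar>w xi - w xj\<bar>) in
      if den = 0 then 0 else \<bar>\<Sum>xj\<in>neighbours Th Om xi. (w xi - w xj)\<bar> / den)"
  have nv: "xi_fun Th Om w xi = ?g xi"
    using nodal_interp_props(2)[OF ct, where f = ?g, OF xin] unfolding xi_fun_def by simp
  have fin: "finite ?N" by (rule neighbours_finite[OF ct])
  have e1: "(\<Sum>xj\<in>?N. \<bar>w xi - w xj\<bar>) = (\<Sum>xj\<in>?N. w xj - w xi)"
    using mn by (intro sum.cong) auto
  have e2: "\<bar>\<Sum>xj\<in>?N. (w xi - w xj)\<bar> = (\<Sum>xj\<in>?N. w xj - w xi)"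
  proof -
    have "(\<Sum>xj\<in>?N. (w xi - w xj)) = - (\<Sum>xj\<in>?N. w xj - w xi)" by (simp add: sum_negf[symmetric])
    moreover have "(\<Sum>xj\<in>?N. w xj - w xi) \<ge> 0" using mn by (intro sum_nonneg) auto
    ultimately show ?thesis by simp
  qed
  have pos: "(\<Sum>xj\<in>?N. w xj - w xi) > 0"
  proof -
    have "w xj0 - w xi \<le> (\<Sum>xj\<in>?N. w xj - w xi)"
      using mn fin j0(1) by (intro member_le_sum) auto
    moreover have "w xj0 - w xi > 0" using mn j0 by force
    ultimately show ?thesis by simp
  qed
  show ?thesis using nv e1 e2 pos by (simp add: Let_def)
qed

lemma alpha_ge1:
  assumes ct: "conforming_triangulation Th Om" and E: "E \<in> edges Th" and xiE: "xi \<in> E"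
    and one: "xi_fun Th Om w xi = 1" and p: "p \<ge> 1"
  shows "alpha_E Th Om p w E \<ge> 1"
proof -
  obtain T where T: "T \<in> Th" "E \<subseteq> T" using E by (auto simp: edges_def)
  have sub: "convex hull E \<subseteq> convex hull T" using T(2) by (rule hull_mono)
  let ?S = "(\<lambda>x. (xi_fun Th Om w x) powr p) ` (convex hull E)"
  have bdd: "bdd_above ?S"
  proof (rule bdd_aboveI[of _ 1])
    fix y assume "y \<in> ?S"
    then obtain x where x: "x \<in> convex hull E" "y = (xi_fun Th Om w x) powr p" by auto
    have "0 \<le> xi_fun Th Om w x \<and> xi_fun Th Om w x \<le> 1"
      using xi_fun_bounds[OF ct T(1)] sub x(1) by blast
    then have "\<bar>xi_fun Th Om w x\<bar> \<le> 1" by simp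
    then show "y \<le> 1" using x(2) p powr_le1[of p "xi_fun Th Om w x"] by simp
  qed
  have "1 \<in> ?S"
  proof -
    have "xi \<in> convex hull E" using xiE hull_inc[of xi E convex] by simp
    moreover have "(xi_fun Th Om w xi) powr p = 1" using one by simp
    ultimately show ?thesis by (metis image_eqI)
  qed
  then show ?thesis unfolding alpha_E_def using bdd by (rule cSup_upper)
qed




lemma dh_bound:
  assumes ct: "conforming_triangulation Th Om" and xin: "xi \<in> nodes Th" and u: "u \<in> Vh Th"
    and pm: "\<forall>x\<in>patch Th xi. u xi \<le> u x" and g: "\<gamma>0 \<ge> 0" and p: "p \<ge> 1"
  shows "d_h Th Om p \<gamma>0 u u (nodal_basis Th xi) \<le>
    - (\<Sum>E\<in>edges_at Th Om xi. \<gamma>0 * edge_len E * \<bar>u (snd (edge_ends E)) - u (fst (edge_ends E))\<bar>)"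
proof -
  let ?psi = "nodal_basis Th xi"
  have psiV: "?psi \<in> Vh Th" and psin: "\<And>x. x \<in> nodes Th \<Longrightarrow> ?psi x = (if x = xi then 1 else 0)"
    using psi_props[OF ct] by auto
  let ?IE = "interior_edges Th Om" and ?EA = "edges_at Th Om xi"
  define tm where "tm E = \<gamma>0 * (edge_len E)^2 * alpha_E Th Om p u E *
      line_integral E (\<lambda>z. tang_deriv E u z * tang_deriv E ?psi z)" for E
  have finIE: "finite ?IE"
    using edges_finite[OF ct] by (rule finite_subset[rotated]) (auto simp: interior_edges_def)
  have EAsub: "?EA \<subseteq> ?IE" by (auto simp: edges_at_def)
  have LI: "line_integral E (\<lambda>z. tang_deriv E u z * tang_deriv E ?psi z)
     = (u (snd (edge_ends E)) - u (fst (edge_ends E))) * (?psi (snd (edge_ends E)) - ?psi (fst (edge_ends E))) / edge_len E"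
    if "E \<in> edges Th" for E
    using edge_formulas(2)[OF that u psiV] by simp
  have zero: "tm E = 0" if "E \<in> ?IE - ?EA" for E
  proof -
    have Ee: "E \<in> edges Th" and nx: "xi \<notin> E" using that by (auto simp: interior_edges_def edges_at_def)
    have "fst (edge_ends E) \<in> nodes Th" "snd (edge_ends E) \<in> nodes Th"
      using edge_ends_props[OF Ee] edges_sub[OF Ee] by auto
    moreover have "fst (edge_ends E) \<noteq> xi" "snd (edge_ends E) \<noteq> xi"
      using edge_ends_props[OF Ee] nx by auto
    ultimately show ?thesis using LI[OF Ee] psin by (simp add: tm_def)
  qed
  have dh: "d_h Th Om p \<gamma>0 u u ?psi = (\<Sum>E\<in>?EA. tm E)"
    unfolding d_h_def tm_def[symmetric]
    by (rule sum.mono_neutral_right[OF finIE EAsub]) (use zero in auto)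
  have each: "tm E \<le> - (\<gamma>0 * edge_len E * \<bar>u (snd (edge_ends E)) - u (fst (edge_ends E))\<bar>)"
    if E: "E \<in> ?EA" for E
  proof -
    obtain xj where xj: "E = {xi, xj}" "xj \<noteq> xi" "xj \<in> nodes Th" "xj \<in> neighbours Th Om xi"
      using edges_at_other[OF E] by blast
    have Ee: "E \<in> edges Th" using E by (auto simp: edges_at_def interior_edges_def)
    let ?p1 = "fst (edge_ends E)" and ?p2 = "snd (edge_ends E)"
    have pp: "{?p1, ?p2} = {xi, xj}" "?p1 \<noteq> ?p2" using edge_ends_props[OF Ee] xj(1) by auto
    have uj: "u xi \<le> u xj" using pm edge_patch[of xi xj Th] xj(1) Ee by auto
    have h: "edge_len E > 0" using edge_len_eq[OF Ee] pp(2) by simp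
    have key: "(u ?p2 - u ?p1) * (?psi ?p2 - ?psi ?p1) = - \<bar>u ?p2 - u ?p1\<bar>"
    proof (cases "?p1 = xi")
      case True
      then have "?p2 = xj" using pp by (metis doubleton_eq_iff)
      then show ?thesis using True psin[OF xin] psin[OF xj(3)] xj(2) uj by simp
    next
      case False
      then have "?p1 = xj" "?p2 = xi" using pp by (metis doubleton_eq_iff)+
      then show ?thesis using psin[OF xin] psin[OF xj(3)] xj(2) uj by simp
    qed
    define D where "D = \<bar>u ?p2 - u ?p1\<bar>"
    have tE: "tm E = - (\<gamma>0 * edge_len E * alpha_E Th Om p u E * D)"
      using LI[OF Ee] key h by (simp add: tm_def D_def power2_eq_square)
    show ?thesis
    proof (cases "D = 0")
      case True then show ?thesis using tE by (simp add: D_def)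
    next
      case False
      then have "u xj \<noteq> u xi" using pp by (auto simp: D_def doubleton_eq_iff)
      moreover have "\<forall>y\<in>neighbours Th Om xi. u xi \<le> u y"
        using pm edge_patch by (auto simp: neighbours_def interior_edges_def)
      ultimately have "xi_fun Th Om u xi = 1" using xi_fun_at_min[OF ct xin _ xj(4)] by blast
      then have a1: "alpha_E Th Om p u E \<ge> 1"
        using alpha_ge1[OF ct Ee _ _ p] xj(1) by blast
      have "\<gamma>0 * edge_len E * D \<ge> 0" using g h by (simp add: D_def)
      then have "\<gamma>0 * edge_len E * D * 1 \<le> \<gamma>0 * edge_len E * D * alpha_E Th Om p u E"
        using a1 by (intro mult_left_mono) auto
      then show ?thesis using tE by (simp add: D_def mult_ac)
    qed
  qed
  show ?thesis unfolding dh using each by (simp add: sum_negf[symmetric] sum_mono)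
qed




lemma negligible_small_hull:
  fixes F :: "pt set"
  assumes "finite F" "card F \<le> 2"
  shows "negligible (convex hull F)"
proof -
  have "aff_dim (convex hull F) = aff_dim F" by (rule aff_dim_convex_hull)
  also have "\<dots> \<le> int (card F) - 1" using aff_dim_le_card[OF assms(1)] by simp
  also have "\<dots> < int DIM(pt)" using assms(2) by simp
  finally have "interior (convex hull F) = {}" using aff_dim_nonempty_interior by fastforce
  then show ?thesis using negligible_convex_interior[of "convex hull F"] by (simp add: convex_convex_hull)
qed

lemma hull_int_negl:
  assumes ct: "conforming_triangulation Th Om" and T: "T1 \<in> Th" "T2 \<in> Th" "T1 \<noteq> T2"
  shows "negligible (convex hull T1 \<inter> convex hull T2)"
proof -
  have h: "\<forall>T1\<in>Th. \<forall>T2\<in>Th. T1 \<noteq> T2 \<longrightarrow>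
        (convex hull T1) \<inter> (convex hull T2) = convex hull (T1 \<inter> T2)"
    using ct by (simp add: conforming_triangulation_def)
  have tri: "is_triangle T1" "is_triangle T2" using ct_tri[OF ct] T by auto
  have f1: "finite T1" "finite T2" using tri tri_finite by auto
  have c3: "card T1 = 3" "card T2 = 3" using tri by (auto simp: is_triangle_def)
  have "card (T1 \<inter> T2) \<le> 2"
  proof (rule ccontr)
    assume "\<not> card (T1 \<inter> T2) \<le> 2"
    moreover have "card (T1 \<inter> T2) \<le> 3" using card_mono[OF f1(1), of "T1 \<inter> T2"] c3 by auto
    ultimately have c: "card (T1 \<inter> T2) = card T1" "card (T1 \<inter> T2) = card T2" using c3 by auto
    have "T1 \<inter> T2 = T1" using card_subset_eq[OF f1(1) _ c(1)] by blast
    moreover have "T1 \<inter> T2 = T2" using card_subset_eq[OF f1(2) _ c(2)] by blast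
    ultimately show False using T(3) by simp
  qed
  then have "negligible (convex hull (T1 \<inter> T2))"
    using negligible_small_hull f1 by simp
  then show ?thesis using h T by simp
qed

lemma tri_diam_edge:
  assumes ct: "conforming_triangulation Th Om" and sr: "shape_regular \<kappa> Th" and T: "T \<in> Th"
    and pq: "p \<in> T" "q \<in> T" "p \<noteq> q"
  shows "diameter (convex hull T) \<le> 4 * \<kappa> * dist p q"
proof -
  have tri: "is_triangle T" using ct_tri[OF ct T] .
  have s: "diameter (convex hull T) \<le> \<kappa> * inradius T" using sr T by (simp add: shape_regular_def)
  note inf = inradius_facts[OF tri s]
  obtain c r0 where r0: "r0 > inradius T / 2" "ball c r0 \<subseteq> convex hull T" using inf(3) by blast
  have "r0 > 0" using r0 inf(2) by linarith
  have e: "r0 \<le> 2 * dist p q" by (rule edge_lower[OF tri pq r0(2) \<open>r0 > 0\<close>])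
  have k: "\<kappa> > 0" using s inf(1,2) by (metis less_le_trans mult_le_0_iff not_le less_eq_real_def)
  have "diameter (convex hull T) \<le> \<kappa> * inradius T" by (rule s)
  also have "\<dots> \<le> \<kappa> * (2 * r0)" using r0 k by (intro mult_left_mono) auto
  also have "\<dots> \<le> \<kappa> * (4 * dist p q)" using e k by (intro mult_left_mono) auto
  finally show ?thesis by simp
qed

lemma sum_meas_bound:
  assumes ct: "conforming_triangulation Th Om" and sr: "shape_regular \<kappa> Th"
    and pq: "p \<noteq> q" and k: "\<kappa> > 0"
  shows "(\<Sum>T\<in>{T\<in>Th. {p,q} \<subseteq> T}. measure lebesgue (convex hull T)) \<le> 64 * \<kappa>^2 * (dist p q)^2"
proof -
  let ?Q = "{T\<in>Th. {p,q} \<subseteq> T}"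
  define R where "R = 4 * \<kappa> * dist p q"
  have R0: "R \<ge> 0" using k by (simp add: R_def)
  have finQ: "finite ?Q" using ct_finite[OF ct] by simp
  have lm: "convex hull T \<in> lmeasurable" if "T \<in> Th" for T
    using ct_tri[OF ct that] tri_finite finite_imp_compact_convex_hull lmeasurable_compact by blast
  have "(\<Sum>T\<in>?Q. measure lebesgue (convex hull T)) = measure lebesgue (\<Union>T\<in>?Q. convex hull T)"
    by (rule measure_negligible_finite_Union_image[symmetric, OF finQ])
       (use lm hull_int_negl[OF ct] in \<open>auto simp: pairwise_def\<close>)
  also have "\<dots> \<le> measure lebesgue (cball p R)"
  proof (rule measure_mono_fmeasurable)
    show "(\<Union>T\<in>?Q. convex hull T) \<subseteq> cball p R"
    proof clarify
      fix T y assume T: "T \<in> Th" "{p,q} \<subseteq> T" and y: "y \<in> convex hull T"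
      have "p \<in> convex hull T" using T hull_inc[of p T convex] by auto
      then have "dist p y \<le> diameter (convex hull T)"
        using diameter_bounded_bound[OF hull_bounded[OF ct_tri[OF ct T(1)]]] y by blast
      also have "\<dots> \<le> R" using tri_diam_edge[OF ct sr T(1) _ _ pq] T(2) by (simp add: R_def)
      finally show "y \<in> cball p R" by simp
    qed
    show "(\<Union>T\<in>?Q. convex hull T) \<in> sets lebesgue" using lm finQ by (intro sets.finite_UN) auto
  qed simp
  also have "\<dots> = measure lborel (cball p R)" by (simp add: measure_completion)
  also have "\<dots> = measure lborel (ball p R)" by (rule content_cball_conv_ball)
  also have "\<dots> = R^2 * pi" by (rule circle_area[OF R0])
  also have "\<dots> \<le> R^2 * 4" using pi_less_4 by (intro mult_left_mono) auto
  also have "\<dots> = 64 * \<kappa>^2 * (dist p q)^2" by (simp add: R_def power_mult_distrib)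
  finally show ?thesis .
qed




definition Dl :: "(pt \<Rightarrow> real) \<Rightarrow> pt set \<Rightarrow> real" where
  "Dl u E = \<bar>u (snd (edge_ends E)) - u (fst (edge_ends E))\<bar>"

definition SW :: "pt set set \<Rightarrow> pt set \<Rightarrow> pt \<Rightarrow> (pt \<Rightarrow> real) \<Rightarrow> pt set \<Rightarrow> (real \<Rightarrow> real) \<Rightarrow> real" where
  "SW Th Om xi u T w = (\<Sum>E\<in>{E\<in>edges_at Th Om xi. E \<subseteq> T}. Dl u E * w (edge_len E))"

lemma Dl_pair:
  assumes "E \<in> edges Th" "E = {x, y}"
  shows "Dl u E = \<bar>u y - u x\<bar>" "edge_len E = dist x y"
proof -
  have pp: "{fst (edge_ends E), snd (edge_ends E)} = {x, y}" using edge_ends_props[OF assms(1)] assms(2) by auto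
  show "Dl u E = \<bar>u y - u x\<bar>" using pp unfolding Dl_def doubleton_eq_iff by auto
  show "edge_len E = dist x y" using pp edge_len_eq[OF assms(1)] unfolding doubleton_eq_iff
    by (auto simp: dist_commute)
qed

lemma edges_at_finite:
  assumes ct: "conforming_triangulation Th Om" shows "finite (edges_at Th Om xi)"
  using edges_finite[OF ct] by (rule finite_subset[rotated]) (auto simp: edges_at_def interior_edges_def)

lemma tri_est:
  assumes ct: "conforming_triangulation Th Om" and sr: "shape_regular \<kappa> Th"
    and T: "T \<in> Th" "xi \<in> T" and xiOm: "xi \<in> Om" and Om: "open Om"
    and u: "u \<in> Vh Th" and pm: "\<forall>x\<in>patch Th xi. u xi \<le> u x"
    and a: "\<forall>y\<in>convex hull T. u y = a \<bullet> y + c"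
    and a': "\<forall>y\<in>convex hull T. nodal_basis Th xi y = a' \<bullet> y + c'"
  shows "norm a \<le> SW Th Om xi u T (\<lambda>h. 2 * \<kappa> / h)"
    "norm a * norm a' \<le> SW Th Om xi u T (\<lambda>h. 4 * \<kappa>^2 / h^2)"
    "\<And>x. x \<in> convex hull T \<Longrightarrow> 0 \<le> nodal_basis Th xi x \<and> nodal_basis Th xi x \<le> 1"
    "\<And>x. x \<in> convex hull T \<Longrightarrow> (u x - u xi) * nodal_basis Th xi x \<le> SW Th Om xi u T (\<lambda>h. 1)"
proof -
  let ?psi = "nodal_basis Th xi"
  have tri: "is_triangle T" using ct_tri[OF ct T(1)] .
  obtain j k where jk: "T = {xi, j, k}" "xi \<noteq> j" "xi \<noteq> k" "j \<noteq> k"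
  proof -
    obtain x y z where T3: "T = {x,y,z}" "x \<noteq> y" "y \<noteq> z" "x \<noteq> z"
      using tri unfolding is_triangle_def card_3_iff by blast
    show ?thesis using T(2) T3 that by (auto simp: insert_commute)
  qed
  have nodesT: "v \<in> nodes Th" if "v \<in> T" for v using T(1) that by (auto simp: nodes_def)
  have psiV: "\<And>x. x \<in> nodes Th \<Longrightarrow> ?psi x = (if x = xi then 1 else 0)" using psi_props[OF ct] by auto
  have pj: "?psi j = 0" "?psi k = 0" "?psi xi = 1" using psiV nodesT jk by auto
  have xif: "xi \<notin> frontier Om" using xiOm Om by (simp add: frontier_def interior_open)
  have inEA: "{xi, v} \<in> edges_at Th Om xi" if "v \<in> T" "v \<noteq> xi" for v
  proof -
    have e: "{xi, v} \<in> edges Th" unfolding edges_def using that T by blast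
    have "xi \<in> convex hull {xi, v}" using hull_inc[of xi "{xi,v}" convex] by simp
    then have "\<not> convex hull {xi, v} \<subseteq> frontier Om" using xif by blast
    then show ?thesis using e by (auto simp: edges_at_def interior_edges_def)
  qed
  have Ej: "{xi, j} \<in> edges_at Th Om xi" and Ek: "{xi, k} \<in> edges_at Th Om xi"
    using inEA jk by auto
  have Eje: "{xi, j} \<in> edges Th" and Eke: "{xi, k} \<in> edges Th"
    using Ej Ek by (auto simp: edges_at_def interior_edges_def)
  define Dj where "Dj = \<bar>u j - u xi\<bar>"
  define Dk where "Dk = \<bar>u k - u xi\<bar>"
  define hj where "hj = dist xi j"
  define hk where "hk = dist xi k"
  have Dlj: "Dl u {xi, j} = Dj" "edge_len {xi, j} = hj" using Dl_pair[OF Eje refl] by (auto simp: Dj_def hj_def)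
  have Dlk: "Dl u {xi, k} = Dk" "edge_len {xi, k} = hk" using Dl_pair[OF Eke refl] by (auto simp: Dk_def hk_def)
  have hpos: "hj > 0" "hk > 0" using jk by (auto simp: hj_def hk_def)
  have SWge: "Dj * w hj + Dk * w hk \<le> SW Th Om xi u T w" if w: "\<And>h. h > 0 \<Longrightarrow> w h \<ge> 0" for w
  proof -
    have sub: "{{xi, j}, {xi, k}} \<subseteq> {E\<in>edges_at Th Om xi. E \<subseteq> T}" using Ej Ek jk by auto
    have ne: "{xi, j} \<noteq> {xi, k}" using jk by (auto simp: doubleton_eq_iff)
    have fin: "finite {E\<in>edges_at Th Om xi. E \<subseteq> T}" using edges_at_finite[OF ct] by simp
    have nn: "\<forall>E\<in>{E\<in>edges_at Th Om xi. E \<subseteq> T}. 0 \<le> Dl u E * w (edge_len E)"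
    proof
      fix E assume "E \<in> {E\<in>edges_at Th Om xi. E \<subseteq> T}"
      then have Ee: "E \<in> edges Th" by (auto simp: edges_at_def interior_edges_def)
      then have "edge_len E > 0" using edge_len_eq[OF Ee] edge_ends_props[OF Ee] by simp
      then show "0 \<le> Dl u E * w (edge_len E)" using w by (simp add: Dl_def)
    qed
    have "(\<Sum>E\<in>{{xi, j}, {xi, k}}. Dl u E * w (edge_len E)) \<le> SW Th Om xi u T w"
      unfolding SW_def by (rule sum_mono2[OF fin sub]) (use nn in auto)
    then show ?thesis using ne Dlj Dlk by simp
  qed
  have s: "diameter (convex hull T) \<le> \<kappa> * inradius T" using sr T by (simp add: shape_regular_def)
  note inf = inradius_facts[OF tri s]
  obtain c0 r0 where r0: "r0 > inradius T / 2" "ball c0 r0 \<subseteq> convex hull T" using inf(3) by blast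
  have r0p: "r0 > 0" using r0 inf(2) by linarith
  have k: "\<kappa> > 0" using s inf(1,2) by (metis less_le_trans mult_le_0_iff not_le less_eq_real_def)
  have bH: "bounded (convex hull T)" by (rule hull_bounded[OF tri])
  have hD: "dist xi v \<le> diameter (convex hull T)" if "v \<in> T" for v
    using diameter_bounded_bound[OF bH] hull_inc[of xi T convex] hull_inc[of v T convex] T(2) that by blast
  have Dr: "diameter (convex hull T) \<le> 2 * \<kappa> * r0"
  proof -
    have "\<kappa> * inradius T \<le> \<kappa> * (2 * r0)" using r0 k by (intro mult_left_mono) auto
    then show ?thesis using s by simp
  qed
  have ir: "1 / r0 \<le> 2 * \<kappa> / h" if "h > 0" "h \<le> diameter (convex hull T)" for h
    using that Dr r0p k by (simp add: field_simps) 
  have irj: "1 / r0 \<le> 2 * \<kappa> / hj" using ir[OF hpos(1)] hD jk by (simp add: hj_def)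
  have irk: "1 / r0 \<le> 2 * \<kappa> / hk" using ir[OF hpos(2)] hD jk by (simp add: hk_def)
  have uj: "u xi \<le> u j" "u xi \<le> u k" using pm vertex_in_patch[OF T] jk by auto
  have ubd: "\<forall>y\<in>convex hull T. u xi \<le> u y \<and> u y \<le> u xi + (Dj + Dk)"
  proof
    fix y assume y: "y \<in> convex hull T"
    have "u y \<le> u xi + (Dj + Dk)" by (rule aff_le_hull[OF a _ y]) (use jk uj in \<open>auto simp: Dj_def Dk_def\<close>)
    moreover have "u xi \<le> u y" by (rule aff_ge_hull[OF a _ y]) (use jk uj in \<open>auto simp: Dj_def Dk_def\<close>)
    ultimately show "u xi \<le> u y \<and> u y \<le> u xi + (Dj + Dk)" by simp
  qed
  have ga: "r0 * norm a \<le> Dj + Dk" using grad_bound[OF r0(2) r0p a ubd] by simp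
  have pbd: "\<forall>y\<in>convex hull T. 0 \<le> ?psi y \<and> ?psi y \<le> 1"
  proof
    fix y assume y: "y \<in> convex hull T"
    have "?psi y \<le> 1" by (rule aff_le_hull[OF a' _ y]) (use jk pj in auto)
    moreover have "0 \<le> ?psi y" by (rule aff_ge_hull[OF a' _ y]) (use jk pj in auto)
    ultimately show "0 \<le> ?psi y \<and> ?psi y \<le> 1" by simp
  qed
  then show "\<And>x. x \<in> convex hull T \<Longrightarrow> 0 \<le> ?psi x \<and> ?psi x \<le> 1" by blast
  have ga': "r0 * norm a' \<le> 1 - 0" using grad_bound[OF r0(2) r0p a' pbd] .
  have Dnn: "Dj \<ge> 0" "Dk \<ge> 0" by (auto simp: Dj_def Dk_def)
  have na: "norm a \<le> Dj * (1/r0) + Dk * (1/r0)" using ga r0p by (simp add: field_simps)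
  also have "\<dots> \<le> Dj * (2 * \<kappa> / hj) + Dk * (2 * \<kappa> / hk)"
    using irj irk Dnn by (intro add_mono mult_left_mono) auto
  also have "\<dots> \<le> SW Th Om xi u T (\<lambda>h. 2 * \<kappa> / h)" by (rule SWge) (use k in auto)
  finally show "norm a \<le> SW Th Om xi u T (\<lambda>h. 2 * \<kappa> / h)" .
  have na': "norm a' \<le> 1 / r0" using ga' r0p by (simp add: field_simps)
  have "norm a * norm a' \<le> (Dj * (1/r0) + Dk * (1/r0)) * (1 / r0)"
    using na na' Dnn r0p by (intro mult_mono) auto
  also have "\<dots> = Dj * (1/r0)^2 + Dk * (1/r0)^2" by (simp add: power2_eq_square algebra_simps)
  also have "\<dots> \<le> Dj * (2 * \<kappa> / hj)^2 + Dk * (2 * \<kappa> / hk)^2"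
    using irj irk Dnn r0p by (intro add_mono mult_left_mono power_mono) auto
  also have "\<dots> = Dj * (4 * \<kappa>^2 / hj^2) + Dk * (4 * \<kappa>^2 / hk^2)" by (simp add: power_divide power_mult_distrib)
  also have "\<dots> \<le> SW Th Om xi u T (\<lambda>h. 4 * \<kappa>^2 / h^2)" by (rule SWge) auto
  finally show "norm a * norm a' \<le> SW Th Om xi u T (\<lambda>h. 4 * \<kappa>^2 / h^2)" .
  fix x assume x: "x \<in> convex hull T"
  have "(u x - u xi) * ?psi x \<le> (Dj + Dk) * 1"
    using ubd pbd x by (intro mult_mono) auto
  also have "\<dots> = Dj * 1 + Dk * 1" by simp
  also have "\<dots> \<le> SW Th Om xi u T (\<lambda>h. 1)" by (rule SWge) auto
  finally show "(u x - u xi) * ?psi x \<le> SW Th Om xi u T (\<lambda>h. 1)" .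
qed




lemma sum_SW_bound:
  assumes ct: "conforming_triangulation Th Om" and sr: "shape_regular \<kappa> Th" and k: "\<kappa> > 0"
    and w: "\<And>h. h > 0 \<Longrightarrow> w h \<ge> 0"
  shows "(\<Sum>T\<in>{T\<in>Th. xi \<in> T}. SW Th Om xi u T w * measure lebesgue (convex hull T))
     \<le> (\<Sum>E\<in>edges_at Th Om xi. Dl u E * w (edge_len E) * (64 * \<kappa>^2 * (edge_len E)^2))"
proof -
  let ?P = "{T\<in>Th. xi \<in> T}" and ?EA = "edges_at Th Om xi"
  let ?m = "\<lambda>T. measure lebesgue (convex hull T)"
  have finP: "finite ?P" using ct_finite[OF ct] by simp
  have finEA: "finite ?EA" by (rule edges_at_finite[OF ct])
  have "(\<Sum>T\<in>?P. SW Th Om xi u T w * ?m T)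
      = (\<Sum>T\<in>?P. \<Sum>E\<in>?EA. (if E \<subseteq> T then Dl u E * w (edge_len E) * ?m T else 0))"
    unfolding SW_def by (simp add: sum_distrib_right sum.inter_filter[OF finEA]) (intro sum.cong refl, simp)
  also have "\<dots> = (\<Sum>E\<in>?EA. \<Sum>T\<in>?P. (if E \<subseteq> T then Dl u E * w (edge_len E) * ?m T else 0))"
    by (rule sum.swap)
  also have "\<dots> \<le> (\<Sum>E\<in>?EA. Dl u E * w (edge_len E) * (64 * \<kappa>^2 * (edge_len E)^2))"
  proof (rule sum_mono)
    fix E assume E: "E \<in> ?EA"
    have Ee: "E \<in> edges Th" using E by (auto simp: edges_at_def interior_edges_def)
    let ?p1 = "fst (edge_ends E)" and ?p2 = "snd (edge_ends E)"
    have pp: "E = {?p1, ?p2}" "?p1 \<noteq> ?p2" using edge_ends_props[OF Ee] by auto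
    have h: "edge_len E = dist ?p1 ?p2" by (rule edge_len_eq[OF Ee])
    have c: "Dl u E * w (edge_len E) \<ge> 0" using w h pp by (simp add: Dl_def)
    have m0: "?m T \<ge> 0" for T by simp
    have "(\<Sum>T\<in>?P. (if E \<subseteq> T then Dl u E * w (edge_len E) * ?m T else 0))
        = Dl u E * w (edge_len E) * (\<Sum>T\<in>{T\<in>?P. E \<subseteq> T}. ?m T)"
      unfolding sum.inter_filter[OF finP, symmetric] by (rule sum_distrib_left[symmetric])
    also have "\<dots> \<le> Dl u E * w (edge_len E) * (\<Sum>T\<in>{T\<in>Th. {?p1, ?p2} \<subseteq> T}. ?m T)"
    proof (rule mult_left_mono[OF _ c])
      show "(\<Sum>T\<in>{T\<in>?P. E \<subseteq> T}. ?m T) \<le> (\<Sum>T\<in>{T\<in>Th. {?p1, ?p2} \<subseteq> T}. ?m T)"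
        by (rule sum_mono2) (use ct_finite[OF ct] pp(1) in auto)
    qed
    also have "\<dots> \<le> Dl u E * w (edge_len E) * (64 * \<kappa>^2 * (edge_len E)^2)"
      using sum_meas_bound[OF ct sr pp(2) k] h c by (intro mult_left_mono) auto
    finally show "(\<Sum>T\<in>?P. (if E \<subseteq> T then Dl u E * w (edge_len E) * ?m T else 0))
        \<le> Dl u E * w (edge_len E) * (64 * \<kappa>^2 * (edge_len E)^2)" .
  qed
  finally show ?thesis .
qed




lemma int_bound:
  fixes f :: "pt \<Rightarrow> real" and H :: "'t \<Rightarrow> pt set"
  assumes fin: "finite P" and lm: "\<And>T. T \<in> P \<Longrightarrow> H T \<in> lmeasurable"
    and K: "\<And>T. T \<in> P \<Longrightarrow> K T \<ge> 0"
    and pw: "AE x in lebesgue. x \<in> Om \<longrightarrow> f x \<le> (\<Sum>T\<in>P. indicator (H T) x * K T)"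
  shows "set_lebesgue_integral lebesgue Om f \<le> (\<Sum>T\<in>P. K T * measure lebesgue (H T))"
proof -
  define g where "g x = (\<Sum>T\<in>P. indicator (H T) x * K T)" for x
  have ig: "integrable lebesgue (\<lambda>x. indicator (H T) x * K T)" if "T \<in> P" for T
  proof -
    have "integrable lebesgue (indicator (H T) :: pt \<Rightarrow> real)"
      using lm[OF that] by (intro integrable_real_indicator) (auto simp: fmeasurable_def)
    then show ?thesis by (rule integrable_mult_left)
  qed
  have intg: "integrable lebesgue g" unfolding g_def using ig by (rule Bochner_Integration.integrable_sum)
  have Ig: "integral\<^sup>L lebesgue g = (\<Sum>T\<in>P. K T * measure lebesgue (H T))"
    unfolding g_def by (subst Bochner_Integration.integral_sum[OF ig]) (auto simp: mult.commute)
  have g0: "g x \<ge> 0" for x unfolding g_def using K by (intro sum_nonneg) auto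
  define F where "F = (\<lambda>x. indicator Om x *\<^sub>R f x)"
  have FG: "AE x in lebesgue. F x \<le> g x"
  proof (rule eventually_mono[OF pw])
    fix x assume imp: "x \<in> Om \<longrightarrow> f x \<le> (\<Sum>T\<in>P. indicator (H T) x * K T)"
    show "F x \<le> g x"
    proof (cases "x \<in> Om")
      case True then show ?thesis using imp by (simp add: F_def g_def)
    next
      case False then show ?thesis using g0[of x] by (simp add: F_def)
    qed
  qed
  have "set_lebesgue_integral lebesgue Om f = integral\<^sup>L lebesgue F"
    by (simp add: set_lebesgue_integral_def F_def)
  also have "\<dots> \<le> integral\<^sup>L lebesgue g"
  proof (cases "integrable lebesgue F")
    case True then show ?thesis using integral_mono_AE[OF True intg FG] by simp
  next
    case False
    then have "integral\<^sup>L lebesgue F = 0" by (rule not_integrable_integral_eq)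
    moreover have "0 \<le> integral\<^sup>L lebesgue g" using g0 by (intro integral_nonneg_AE) auto
    ultimately show ?thesis by simp
  qed
  finally show ?thesis using Ig by simp
qed

lemma Linf_facts:
  assumes Om: "open Om" "Om \<noteq> {}" and b: "Linf_field Om b"
  shows "Linf_norm Om b \<ge> 0" "AE x in lebesgue. x \<in> Om \<longrightarrow> norm (b x) \<le> Linf_norm Om b"
proof -
  let ?M = "lebesgue_on Om" and ?f = "\<lambda>x. ereal (norm (b x))"
  have sO: "Om \<in> sets lebesgue" using Om(1) by (simp add: borel_open)
  have "\<not> negligible Om" using open_not_negligible Om by blast
  then have "emeasure lebesgue Om \<noteq> 0"
    using sO by (simp add: negligible_iff_null_sets null_sets_def)
  then have sp: "emeasure ?M (space ?M) \<noteq> 0"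
    using sO by (simp add: emeasure_restrict_space space_restrict_space)
  have fin: "esssup ?M ?f < \<infinity>" using b by (simp add: Linf_field_def)
  have "esssup ?M (\<lambda>x. 0::ereal) \<le> esssup ?M ?f" by (rule esssup_mono) auto
  moreover have "esssup ?M (\<lambda>x. 0::ereal) = 0" by (rule esssup_const[OF sp])
  ultimately have ge0: "0 \<le> esssup ?M ?f" by simp
  then have eq: "ereal (Linf_norm Om b) = esssup ?M ?f"
    using fin by (simp add: Linf_norm_def ereal_real)
  then show "Linf_norm Om b \<ge> 0" using ge0 by (metis ereal_less_eq(5))
  have "AE x in ?M. ?f x \<le> esssup ?M ?f" by (rule esssup_AE)
  then have "AE x in ?M. norm (b x) \<le> Linf_norm Om b" unfolding eq[symmetric] by simp
  then show "AE x in lebesgue. x \<in> Om \<longrightarrow> norm (b x) \<le> Linf_norm Om b"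
    using sO by (simp add: AE_restrict_space_iff)
qed

lemma frontiers_negligible:
  assumes ct: "conforming_triangulation Th Om"
  shows "(\<Union>T\<in>Th. frontier (convex hull T)) \<in> null_sets lebesgue"
proof -
  have "negligible (\<Union>T\<in>Th. frontier (convex hull T))"
    using ct_finite[OF ct] by (intro negligible_Union) (auto intro: negligible_convex_frontier)
  then show ?thesis by (simp add: negligible_iff_null_sets)
qed

lemma point_in_interior:
  assumes ct: "conforming_triangulation Th Om" and x: "x \<in> Om" "x \<notin> (\<Union>T\<in>Th. frontier (convex hull T))"
  shows "\<exists>T\<in>Th. x \<in> interior (convex hull T)"
proof -
  have "x \<in> closure Om" using x(1) closure_subset by blast
  then obtain T where T: "T \<in> Th" "x \<in> convex hull T" using ct by (auto simp: conforming_triangulation_def)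
  have "closed (convex hull T)"
    using ct_tri[OF ct T(1)] tri_finite finite_imp_compact_convex_hull compact_imp_closed by blast
  then have "x \<in> interior (convex hull T)" using T x(2) by (auto simp: frontier_def)
  then show ?thesis using T by blast
qed




lemma sum_ind_ge:
  fixes K :: "pt set \<Rightarrow> real"
  assumes "finite P" "T \<in> P" "x \<in> convex hull T" "\<And>T. T \<in> P \<Longrightarrow> K T \<ge> 0"
  shows "K T \<le> (\<Sum>T'\<in>P. indicator (convex hull T') x * K T')"
proof -
  have "indicator (convex hull T) x * K T \<le> (\<Sum>T'\<in>P. indicator (convex hull T') x * K T')"
    using assms by (intro member_le_sum) auto
  then show ?thesis using assms(3) by simp
qed

lemma sum_ind_nonneg:
  fixes K :: "pt set \<Rightarrow> real"
  assumes "\<And>T. T \<in> P \<Longrightarrow> K T \<ge> 0"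
  shows "0 \<le> (\<Sum>T'\<in>P. indicator (convex hull T') x * K T')"
  using assms by (intro sum_nonneg) auto

lemma SW_nonneg:
  assumes "\<And>h. h > 0 \<Longrightarrow> w h \<ge> 0"
  shows "SW Th Om xi u T w \<ge> 0"
  unfolding SW_def
proof (rule sum_nonneg)
  fix E assume "E \<in> {E\<in>edges_at Th Om xi. E \<subseteq> T}"
  then have Ee: "E \<in> edges Th" by (auto simp: edges_at_def interior_edges_def)
  then have "edge_len E > 0" using edge_len_eq[OF Ee] edge_ends_props[OF Ee] by simp
  then show "0 \<le> Dl u E * w (edge_len E)" using assms by (simp add: Dl_def)
qed

lemma pointwise:
  assumes ct: "conforming_triangulation Th Om" and sr: "shape_regular \<kappa> Th"
    and Om: "open Om" and xiOm: "xi \<in> Om" and xin: "xi \<in> nodes Th"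
    and u: "u \<in> Vh Th" and pm: "\<forall>x\<in>patch Th xi. u xi \<le> u x" and B: "B \<ge> 0"
    and x: "x \<in> Om" "x \<notin> (\<Union>T\<in>Th. frontier (convex hull T))"
  defines "P \<equiv> {T\<in>Th. xi \<in> T}" and "psi \<equiv> nodal_basis Th xi"
  shows "grad_at u x \<bullet> grad_at psi x \<le> (\<Sum>T\<in>P. indicator (convex hull T) x * SW Th Om xi u T (\<lambda>h. 4 * \<kappa>^2 / h^2))
    \<and> (norm (bb::pt) \<le> B \<longrightarrow> (bb \<bullet> grad_at u x) * psi x \<le> (\<Sum>T\<in>P. indicator (convex hull T) x * (B * SW Th Om xi u T (\<lambda>h. 2 * \<kappa> / h))))
    \<and> (u xi < 0 \<longrightarrow> u x * psi x \<le> (\<Sum>T\<in>P. indicator (convex hull T) x * SW Th Om xi u T (\<lambda>h. 1)))"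
proof -
  obtain T where T: "T \<in> Th" "x \<in> interior (convex hull T)" using point_in_interior[OF ct x] by blast
  have xT: "x \<in> convex hull T" using T(2) interior_subset by blast
  obtain a c where a: "\<forall>y\<in>convex hull T. u y = a \<bullet> y + c" using u T(1) unfolding Vh_def by blast
  obtain a' c' where a': "\<forall>y\<in>convex hull T. psi y = a' \<bullet> y + c'"
    using psi_props(1)[OF ct] T(1) unfolding Vh_def psi_def by blast
  have gu: "grad_at u x = a" by (rule grad_affine[OF T(2) a])
  have finP: "finite P" using ct_finite[OF ct] by (simp add: P_def)
  have k: "\<kappa> > 0"
  proof -
    have tri: "is_triangle T" by (rule ct_tri[OF ct T(1)])
    have s: "diameter (convex hull T) \<le> \<kappa> * inradius T" using sr T by (simp add: shape_regular_def)
    note inf = inradius_facts[OF tri s]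
    show ?thesis using s inf(1,2) by (metis less_le_trans mult_le_0_iff not_le less_eq_real_def)
  qed
  have K1: "\<And>T. T \<in> P \<Longrightarrow> SW Th Om xi u T (\<lambda>h. 4 * \<kappa>^2 / h^2) \<ge> 0" by (rule SW_nonneg) auto
  have K3: "\<And>T. T \<in> P \<Longrightarrow> SW Th Om xi u T (\<lambda>h. 1) \<ge> 0" by (rule SW_nonneg) auto
  have K2': "\<And>T. SW Th Om xi u T (\<lambda>h. 2 * \<kappa> / h) \<ge> 0" by (rule SW_nonneg) (use k in auto)
  have K2: "\<And>T. T \<in> P \<Longrightarrow> B * SW Th Om xi u T (\<lambda>h. 2 * \<kappa> / h) \<ge> 0" using B K2' by simp
  show ?thesis
  proof (cases "xi \<in> T")
    case True
    have TP: "T \<in> P" using T(1) True by (simp add: P_def)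
    have gp: "grad_at psi x = a'" by (rule grad_affine[OF T(2) a'])
    note te = tri_est[OF ct sr T(1) True xiOm Om u pm a a'[unfolded psi_def]]
    have p01: "0 \<le> psi x \<and> psi x \<le> 1" using te(3)[OF xT] by (simp add: psi_def)
    have c1: "grad_at u x \<bullet> grad_at psi x \<le> (\<Sum>T\<in>P. indicator (convex hull T) x * SW Th Om xi u T (\<lambda>h. 4 * \<kappa>^2 / h^2))"
    proof -
      have "grad_at u x \<bullet> grad_at psi x \<le> norm a * norm a'"
        unfolding gu gp by (rule order_trans[OF abs_ge_self Cauchy_Schwarz_ineq2])
      also have "\<dots> \<le> SW Th Om xi u T (\<lambda>h. 4 * \<kappa>^2 / h^2)" by (rule te(2))
      also have "\<dots> \<le> (\<Sum>T\<in>P. indicator (convex hull T) x * SW Th Om xi u T (\<lambda>h. 4 * \<kappa>^2 / h^2))"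
        by (rule sum_ind_ge[OF finP TP xT K1])
      finally show ?thesis .
    qed
    have c2: "(bb \<bullet> grad_at u x) * psi x \<le> (\<Sum>T\<in>P. indicator (convex hull T) x * (B * SW Th Om xi u T (\<lambda>h. 2 * \<kappa> / h)))"
      if bb: "norm bb \<le> B"
    proof -
      have "(bb \<bullet> grad_at u x) * psi x \<le> \<bar>bb \<bullet> a\<bar> * 1"
        unfolding gu using p01 by (smt (verit, best) abs_ge_self mult_left_le mult_nonneg_nonneg abs_ge_zero mult_right_mono)
      also have "\<dots> \<le> norm bb * norm a" using Cauchy_Schwarz_ineq2 by simp
      also have "\<dots> \<le> B * SW Th Om xi u T (\<lambda>h. 2 * \<kappa> / h)"
        using bb te(1) B by (intro mult_mono) auto
      also have "\<dots> \<le> (\<Sum>T\<in>P. indicator (convex hull T) x * (B * SW Th Om xi u T (\<lambda>h. 2 * \<kappa> / h)))"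
        by (rule sum_ind_ge[OF finP TP xT K2])
      finally show ?thesis .
    qed
    have c3: "u x * psi x \<le> (\<Sum>T\<in>P. indicator (convex hull T) x * SW Th Om xi u T (\<lambda>h. 1))"
      if neg: "u xi < 0"
    proof -
      have "u x * psi x \<le> (u x - u xi) * psi x" using neg p01 by (simp add: algebra_simps mult_nonneg_nonpos)
      also have "\<dots> \<le> SW Th Om xi u T (\<lambda>h. 1)" using te(4)[OF xT] by (simp add: psi_def)
      also have "\<dots> \<le> (\<Sum>T\<in>P. indicator (convex hull T) x * SW Th Om xi u T (\<lambda>h. 1))"
        by (rule sum_ind_ge[OF finP TP xT K3])
      finally show ?thesis .
    qed
    show ?thesis using c1 c2 c3 by blast
  next
    case False
    have pv: "psi v = 0" if "v \<in> T" for v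
    proof -
      have "v \<in> nodes Th" using T(1) that by (auto simp: nodes_def)
      moreover have "v \<noteq> xi" using False that by blast
      ultimately show ?thesis using psi_props(2)[OF ct] by (simp add: psi_def)
    qed
    have p0: "\<forall>y\<in>convex hull T. psi y = 0 \<bullet> y + 0"
    proof
      fix y assume y: "y \<in> convex hull T"
      have "psi y \<le> 0" by (rule aff_le_hull[OF a' _ y]) (use pv in auto)
      moreover have "0 \<le> psi y" by (rule aff_ge_hull[OF a' _ y]) (use pv in auto)
      ultimately show "psi y = 0 \<bullet> y + 0" by simp
    qed
    have gp: "grad_at psi x = 0" by (rule grad_affine[OF T(2) p0])
    have px: "psi x = 0" using p0 xT by simp
    show ?thesis using gp px sum_ind_nonneg[of P, OF K1] sum_ind_nonneg[of P, OF K2] sum_ind_nonneg[of P, OF K3]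
      by simp
  qed
qed




lemma bilin_bound:
  assumes ct: "conforming_triangulation Th Om" and sr: "shape_regular \<kappa> Th" and k: "\<kappa> > 0"
    and Om: "open Om" and xiOm: "xi \<in> Om" and xin: "xi \<in> nodes Th"
    and u: "u \<in> Vh Th" and pm: "\<forall>x\<in>patch Th xi. u xi \<le> u x"
    and b: "Linf_field Om b" and eps: "\<epsilon> \<ge> 0" and sig: "\<sigma> \<ge> 0" and sc: "u xi < 0 \<or> \<sigma> = 0"
  shows "bilin_a Om \<epsilon> b \<sigma> u (nodal_basis Th xi) \<le>
      \<epsilon> * (\<Sum>E\<in>edges_at Th Om xi. Dl u E * (4 * \<kappa>^2 / (edge_len E)^2) * (64 * \<kappa>^2 * (edge_len E)^2))
    + Linf_norm Om b * (\<Sum>E\<in>edges_at Th Om xi. Dl u E * (2 * \<kappa> / edge_len E) * (64 * \<kappa>^2 * (edge_len E)^2))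
    + \<sigma> * (\<Sum>E\<in>edges_at Th Om xi. Dl u E * 1 * (64 * \<kappa>^2 * (edge_len E)^2))"
proof -
  let ?P = "{T\<in>Th. xi \<in> T}" and ?N = "\<Union>T\<in>Th. frontier (convex hull T)"
  let ?B = "Linf_norm Om b" and ?psi = "nodal_basis Th xi"
  let ?m = "\<lambda>T. measure lebesgue (convex hull T)"
  have Bf: "?B \<ge> 0" "AE x in lebesgue. x \<in> Om \<longrightarrow> norm (b x) \<le> ?B"
    using Linf_facts[OF Om _ b] xiOm by auto
  have AEN: "AE x in lebesgue. x \<notin> ?N" by (rule AE_I'[OF frontiers_negligible[OF ct]]) auto
  have finP: "finite ?P" using ct_finite[OF ct] by simp
  have lm: "convex hull T \<in> lmeasurable" if "T \<in> ?P" for T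
    using that ct_tri[OF ct] tri_finite finite_imp_compact_convex_hull lmeasurable_compact by blast
  note pw = pointwise[OF ct sr Om xiOm xin u pm Bf(1)]
  have K1: "\<And>T. T \<in> ?P \<Longrightarrow> SW Th Om xi u T (\<lambda>h. 4 * \<kappa>^2 / h^2) \<ge> 0" by (rule SW_nonneg) auto
  have K3: "\<And>T. T \<in> ?P \<Longrightarrow> SW Th Om xi u T (\<lambda>h. 1) \<ge> 0" by (rule SW_nonneg) auto
  have K2: "\<And>T. T \<in> ?P \<Longrightarrow> ?B * SW Th Om xi u T (\<lambda>h. 2 * \<kappa> / h) \<ge> 0"
    using Bf(1) SW_nonneg[of "\<lambda>h. 2 * \<kappa> / h"] k by simp
  have I1: "set_lebesgue_integral lebesgue Om (\<lambda>x. grad_at u x \<bullet> grad_at ?psi x)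
      \<le> (\<Sum>E\<in>edges_at Th Om xi. Dl u E * (4 * \<kappa>^2 / (edge_len E)^2) * (64 * \<kappa>^2 * (edge_len E)^2))"
  proof -
    have "set_lebesgue_integral lebesgue Om (\<lambda>x. grad_at u x \<bullet> grad_at ?psi x)
        \<le> (\<Sum>T\<in>?P. SW Th Om xi u T (\<lambda>h. 4 * \<kappa>^2 / h^2) * ?m T)"
    proof (rule int_bound[OF finP lm K1])
      show "AE x in lebesgue. x \<in> Om \<longrightarrow> grad_at u x \<bullet> grad_at ?psi x
          \<le> (\<Sum>T\<in>?P. indicator (convex hull T) x * SW Th Om xi u T (\<lambda>h. 4 * \<kappa>^2 / h^2))"
        using AEN
      proof eventually_elim
        case (elim x) then show ?case using pw by blast
      qed
    qed
    also have "\<dots> \<le> (\<Sum>E\<in>edges_at Th Om xi. Dl u E * (4 * \<kappa>^2 / (edge_len E)^2) * (64 * \<kappa>^2 * (edge_len E)^2))"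
      by (rule sum_SW_bound[OF ct sr k]) auto
    finally show ?thesis .
  qed
  have I2: "set_lebesgue_integral lebesgue Om (\<lambda>x. (b x \<bullet> grad_at u x) * ?psi x)
      \<le> ?B * (\<Sum>E\<in>edges_at Th Om xi. Dl u E * (2 * \<kappa> / edge_len E) * (64 * \<kappa>^2 * (edge_len E)^2))"
  proof -
    have "set_lebesgue_integral lebesgue Om (\<lambda>x. (b x \<bullet> grad_at u x) * ?psi x)
        \<le> (\<Sum>T\<in>?P. (?B * SW Th Om xi u T (\<lambda>h. 2 * \<kappa> / h)) * ?m T)"
    proof (rule int_bound[OF finP lm K2])
      show "AE x in lebesgue. x \<in> Om \<longrightarrow> (b x \<bullet> grad_at u x) * ?psi x
          \<le> (\<Sum>T\<in>?P. indicator (convex hull T) x * (?B * SW Th Om xi u T (\<lambda>h. 2 * \<kappa> / h)))"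
        using AEN Bf(2)
      proof eventually_elim
        case (elim x) then show ?case using pw[where bb = "b x"] by blast
      qed
    qed
    also have "\<dots> = ?B * (\<Sum>T\<in>?P. SW Th Om xi u T (\<lambda>h. 2 * \<kappa> / h) * ?m T)"
      by (simp add: sum_distrib_left mult.assoc)
    also have "\<dots> \<le> ?B * (\<Sum>E\<in>edges_at Th Om xi. Dl u E * (2 * \<kappa> / edge_len E) * (64 * \<kappa>^2 * (edge_len E)^2))"
      by (rule mult_left_mono[OF sum_SW_bound[OF ct sr k] Bf(1)]) (use k in auto)
    finally show ?thesis .
  qed
  have I3: "\<sigma> * set_lebesgue_integral lebesgue Om (\<lambda>x. u x * ?psi x)
      \<le> \<sigma> * (\<Sum>E\<in>edges_at Th Om xi. Dl u E * 1 * (64 * \<kappa>^2 * (edge_len E)^2))"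
  proof (cases "\<sigma> = 0")
    case True then show ?thesis by simp
  next
    case False
    then have neg: "u xi < 0" using sc by simp
    have "set_lebesgue_integral lebesgue Om (\<lambda>x. u x * ?psi x)
        \<le> (\<Sum>T\<in>?P. SW Th Om xi u T (\<lambda>h. 1) * ?m T)"
    proof (rule int_bound[OF finP lm K3])
      show "AE x in lebesgue. x \<in> Om \<longrightarrow> u x * ?psi x
          \<le> (\<Sum>T\<in>?P. indicator (convex hull T) x * SW Th Om xi u T (\<lambda>h. 1))"
        using AEN
      proof eventually_elim
        case (elim x) then show ?case using pw neg by blast
      qed
    qed
    also have "\<dots> \<le> (\<Sum>E\<in>edges_at Th Om xi. Dl u E * 1 * (64 * \<kappa>^2 * (edge_len E)^2))"
      by (rule sum_SW_bound[OF ct sr k]) auto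
    finally show ?thesis using sig by (rule mult_left_mono)
  qed
  have "\<epsilon> * set_lebesgue_integral lebesgue Om (\<lambda>x. grad_at u x \<bullet> grad_at ?psi x)
      \<le> \<epsilon> * (\<Sum>E\<in>edges_at Th Om xi. Dl u E * (4 * \<kappa>^2 / (edge_len E)^2) * (64 * \<kappa>^2 * (edge_len E)^2))"
    using I1 eps by (rule mult_left_mono)
  then show ?thesis using I2 I3 unfolding bilin_a_def by linarith
qed




theorem mainTheorem7:
  shows "\<forall>\<kappa>>0. \<exists>C0>0. \<exists>C1>0. \<exists>C2>0.
    \<forall>(Om :: pt set) Th \<epsilon> (b :: pt \<Rightarrow> pt) \<sigma> (p :: real) \<gamma>0 u xi.
      open Om \<and> bounded Om \<and> lipschitz_boundary Om \<and>
      conforming_triangulation Th Om \<and> shape_regular \<kappa> Th \<and>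
      \<epsilon> > 0 \<and> Linf_field Om b \<and> div_free Om b \<and> \<sigma> \<ge> 0 \<and>
      p \<ge> 1 \<and> \<gamma>0 > 0 \<and>
      (\<forall>E\<in>interior_edges Th Om.
         \<gamma>0 \<ge> C0 * \<sigma> * edge_len E + C1 * Linf_norm Om b + C2 * \<epsilon> / edge_len E) \<and>
      u \<in> Vh Th \<and> xi \<in> interior_nodes Th Om \<and>
      (\<forall>x\<in>patch Th xi. u xi \<le> u x) \<and> (u xi < 0 \<or> \<sigma> = 0)
      \<longrightarrow>
      a_tilde Th Om \<epsilon> b \<sigma> p \<gamma>0 u (nodal_basis Th xi)
        \<le> - (\<Sum>E\<in>edges_at Th Om xi.
               (\<gamma>0 - C0 * \<sigma> * edge_len E - C1 * Linf_norm Om b - C2 * \<epsilon> / edge_len E)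
               * (edge_len E)^2 * \<bar>tang_deriv E u (edge_midpoint E)\<bar>)"
proof (intro allI impI)
  fix \<kappa> :: real assume k: "\<kappa> > 0"
  define C0 where "C0 = 64 * \<kappa>^2"
  define C1 where "C1 = 128 * \<kappa>^3"
  define C2 where "C2 = 256 * \<kappa>^4"
  have Cpos: "C0 > 0" "C1 > 0" "C2 > 0" using k by (simp_all add: C0_def C1_def C2_def)
  have H: "a_tilde Th Om \<epsilon> b \<sigma> p \<gamma>0 u (nodal_basis Th xi)
        \<le> - (\<Sum>E\<in>edges_at Th Om xi.
               (\<gamma>0 - C0 * \<sigma> * edge_len E - C1 * Linf_norm Om b - C2 * \<epsilon> / edge_len E)
               * (edge_len E)^2 * \<bar>tang_deriv E u (edge_midpoint E)\<bar>)"
    if hyp: "open Om \<and> bounded Om \<and> lipschitz_boundary Om \<and>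
      conforming_triangulation Th Om \<and> shape_regular \<kappa> Th \<and>
      \<epsilon> > 0 \<and> Linf_field Om b \<and> div_free Om b \<and> \<sigma> \<ge> 0 \<and>
      p \<ge> 1 \<and> \<gamma>0 > 0 \<and>
      (\<forall>E\<in>interior_edges Th Om.
         \<gamma>0 \<ge> C0 * \<sigma> * edge_len E + C1 * Linf_norm Om b + C2 * \<epsilon> / edge_len E) \<and>
      u \<in> Vh Th \<and> xi \<in> interior_nodes Th Om \<and>
      (\<forall>x\<in>patch Th xi. u xi \<le> u x) \<and> (u xi < 0 \<or> \<sigma> = 0)"
    for Om :: "pt set" and Th \<epsilon> and b :: "pt \<Rightarrow> pt" and \<sigma> and p :: real and \<gamma>0 u xi
  proof -
    have Om: "open Om" and ct: "conforming_triangulation Th Om" and sr: "shape_regular \<kappa> Th"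
      and eps: "\<epsilon> > 0" and b: "Linf_field Om b" and sig: "\<sigma> \<ge> 0" and p: "p \<ge> 1"
      and g: "\<gamma>0 > 0" and u: "u \<in> Vh Th" and xiI: "xi \<in> interior_nodes Th Om"
      and pm: "\<forall>x\<in>patch Th xi. u xi \<le> u x" and sc: "u xi < 0 \<or> \<sigma> = 0"
      using hyp by auto
    have xin: "xi \<in> nodes Th" and xiOm: "xi \<in> Om" using xiI by (auto simp: interior_nodes_def)
    let ?EA = "edges_at Th Om xi" and ?B = "Linf_norm Om b"
    let ?A = "\<lambda>E. Dl u E * (4 * \<kappa>^2 / (edge_len E)^2) * (64 * \<kappa>^2 * (edge_len E)^2)"
    let ?Bt = "\<lambda>E. Dl u E * (2 * \<kappa> / edge_len E) * (64 * \<kappa>^2 * (edge_len E)^2)"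
    let ?Ct = "\<lambda>E. Dl u E * 1 * (64 * \<kappa>^2 * (edge_len E)^2)"
    have dh: "d_h Th Om p \<gamma>0 u u (nodal_basis Th xi) \<le> - (\<Sum>E\<in>?EA. \<gamma>0 * edge_len E * Dl u E)"
      using dh_bound[OF ct xin u pm _ p] g by (simp add: Dl_def)
    have bl: "bilin_a Om \<epsilon> b \<sigma> u (nodal_basis Th xi) \<le> \<epsilon> * (\<Sum>E\<in>?EA. ?A E) + ?B * (\<Sum>E\<in>?EA. ?Bt E) + \<sigma> * (\<Sum>E\<in>?EA. ?Ct E)"
      by (rule bilin_bound[OF ct sr k Om xiOm xin u pm b _ sig sc]) (use eps in simp)
    have perE: "- ((\<gamma>0 - C0 * \<sigma> * edge_len E - C1 * ?B - C2 * \<epsilon> / edge_len E)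
               * (edge_len E)^2 * \<bar>tang_deriv E u (edge_midpoint E)\<bar>)
        = - (\<gamma>0 * edge_len E * Dl u E) + (\<epsilon> * ?A E + ?B * ?Bt E + \<sigma> * ?Ct E)" if E: "E \<in> ?EA" for E
    proof -
      have Ee: "E \<in> edges Th" using E by (auto simp: edges_at_def interior_edges_def)
      have h: "edge_len E > 0" using edge_len_eq[OF Ee] edge_ends_props[OF Ee] by simp
      have t: "\<bar>tang_deriv E u (edge_midpoint E)\<bar> = Dl u E / edge_len E"
        using edge_formulas(1)[OF Ee u u] h by (simp add: Dl_def)
      show ?thesis unfolding t using h
        by (simp add: C0_def C1_def C2_def field_simps power2_eq_square power3_eq_cube power4_eq_xxxx)
    qed
    have "- (\<Sum>E\<in>?EA. (\<gamma>0 - C0 * \<sigma> * edge_len E - C1 * ?B - C2 * \<epsilon> / edge_len E)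
               * (edge_len E)^2 * \<bar>tang_deriv E u (edge_midpoint E)\<bar>)
       = (\<Sum>E\<in>?EA. - ((\<gamma>0 - C0 * \<sigma> * edge_len E - C1 * ?B - C2 * \<epsilon> / edge_len E)
               * (edge_len E)^2 * \<bar>tang_deriv E u (edge_midpoint E)\<bar>))"
      by (simp add: sum_negf)
    also have "\<dots> = (\<Sum>E\<in>?EA. - (\<gamma>0 * edge_len E * Dl u E) + (\<epsilon> * ?A E + ?B * ?Bt E + \<sigma> * ?Ct E))"
      by (rule sum.cong[OF refl perE])
    also have "\<dots> = - (\<Sum>E\<in>?EA. \<gamma>0 * edge_len E * Dl u E) + (\<epsilon> * (\<Sum>E\<in>?EA. ?A E) + ?B * (\<Sum>E\<in>?EA. ?Bt E) + \<sigma> * (\<Sum>E\<in>?EA. ?Ct E))"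
      by (simp only: sum.distrib sum_distrib_left sum_negf)
    finally have R: "- (\<Sum>E\<in>?EA. (\<gamma>0 - C0 * \<sigma> * edge_len E - C1 * ?B - C2 * \<epsilon> / edge_len E)
               * (edge_len E)^2 * \<bar>tang_deriv E u (edge_midpoint E)\<bar>)
       = - (\<Sum>E\<in>?EA. \<gamma>0 * edge_len E * Dl u E) + (\<epsilon> * (\<Sum>E\<in>?EA. ?A E) + ?B * (\<Sum>E\<in>?EA. ?Bt E) + \<sigma> * (\<Sum>E\<in>?EA. ?Ct E))" .
    show ?thesis unfolding a_tilde_def R using dh bl by linarith
  qed
  show "\<exists>C0>0. \<exists>C1>0. \<exists>C2>0.
    \<forall>(Om :: pt set) Th \<epsilon> (b :: pt \<Rightarrow> pt) \<sigma> (p :: real) \<gamma>0 u xi.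
      open Om \<and> bounded Om \<and> lipschitz_boundary Om \<and>
      conforming_triangulation Th Om \<and> shape_regular \<kappa> Th \<and>
      \<epsilon> > 0 \<and> Linf_field Om b \<and> div_free Om b \<and> \<sigma> \<ge> 0 \<and>
      p \<ge> 1 \<and> \<gamma>0 > 0 \<and>
      (\<forall>E\<in>interior_edges Th Om.
         \<gamma>0 \<ge> C0 * \<sigma> * edge_len E + C1 * Linf_norm Om b + C2 * \<epsilon> / edge_len E) \<and>
      u \<in> Vh Th \<and> xi \<in> interior_nodes Th Om \<and>
      (\<forall>x\<in>patch Th xi. u xi \<le> u x) \<and> (u xi < 0 \<or> \<sigma> = 0)
      \<longrightarrow>
      a_tilde Th Om \<epsilon> b \<sigma> p \<gamma>0 u (nodal_basis Th xi)
        \<le> - (\<Sum>E\<in>edges_at Th Om xi.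
               (\<gamma>0 - C0 * \<sigma> * edge_len E - C1 * Linf_norm Om b - C2 * \<epsilon> / edge_len E)
               * (edge_len E)^2 * \<bar>tang_deriv E u (edge_midpoint E)\<bar>)"
    apply (rule exI[where x = C0], rule conjI, rule Cpos(1))
    apply (rule exI[where x = C1], rule conjI, rule Cpos(2))
    apply (rule exI[where x = C2], rule conjI, rule Cpos(3))
    using H by blast
qed


end
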